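(* Let $n\ge 1$ and consider the perturbed chain of integrators $$\dot x_1=x_2,\ \dot x_2=x_3,\ \dots,\ \dot x_{n-1}=x_n,\qquad \dot x_n=f(\mathbf{x},t)+b(\mathbf{x},t)u(t)+d_0(\mathbf{x},t),$$ with state $\mathbf{x}=[x_1,\dots,x_n]^T\in\mathbb{R}^n$, scalar control $u$, locally Lipschitz drift $f:\mathbb{R}^n\times\mathbb{R}^{\ge0}\to\mathbb{R}$ decomposed as $f=f_n+f_\Delta$ with $f_n$ a known nominal part and $f_\Delta$ an unknown perturbation, input gain $b:\mathbb{R}^n\times\mathbb{R}^{\ge0}\to\mathbb{R}$ (with $b(\mathbf{x},t)\neq 0$ so that $b^{-1}$ exists), and unknown perturbation $d_0:\mathbb{R}^n\times\mathbb{R}^{\ge 0}\to\mathbb{R}$. Assume that $|f_\Delta(\mathbf{x},t)|\le f_{\max}$ and $|d_0(\mathbf{x},t)|\le d_{\max}$ for all $(\mathbf{x},t)$, where $f_{\max},d_{\max}\ge 0$ are known constants. Define the full-order integral-terminal sliding manifold $$s=x_n-z,\qquad \dot z=-\sum_{i=1}^n C_i|x_i|^{\alpha_i}\operatorname{sgn}(x_i),\qquad z(0)=x_n(0),$$ where the constants $C_1,\dots,C_n$ are such that the polynomial $p^n+C_np^{n-1}+C_{n-1}p^{n-2}+\cdots+C_2p+C_1$ is Hurwitz, and the exponents are given by $\alpha_1=\alpha$ if $n=1$, and for $n\ge 2$ by $\alpha_{n+1}=1$, $\alpha_n=\alpha$, $\alpha_{i-1}=\dfrac{\alpha_i\alpha_{i+1}}{2\alpha_{i+1}-\alpha_i}$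 for $i=2,\dots,n$, with $\alpha\in(1-\varepsilon,1)$ for some $\varepsilon\in(0,1)$. Apply the control $$u=b^{-1}(\mathbf{x},t)\big(u_{\mathrm{eqv}}+u_{\mathrm{dis}}\big),\quad u_{\mathrm{eqv}}=-f_n(\mathbf{x},t)-\sum_{i=1}^n C_i|x_i|^{\alpha_i}\operatorname{sgn}(x_i),\quad u_{\mathrm{dis}}=-(\eta+d_{\max}+f_{\max})\operatorname{sgn}(s),$$ with $\eta>0$. Then the state trajectories of the closed-loop system converge to the origin in finite time.
   Context: $\operatorname{sgn}$ denotes the standard signum function. The total matched disturbance is $d=d_0+f_\Delta$. The initialization $z(0)=x_n(0)$ means $s(0)=0$. *)

theory Defs
  imports "HOL-Analysis.Analysis" "HOL-Computational_Algebra.Polynomial"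
begin

text \<open>State vectors of R^n are represented as functions nat => real supported on {1..n}.\<close>
definition vecs :: "nat \<Rightarrow> (nat \<Rightarrow> real) set" where
  "vecs n = {v. \<forall>i. i \<notin> {1..n} \<longrightarrow> v i = 0}"

text \<open>Locally Lipschitz on R^n x [0,oo) (equivalently: Lipschitz on bounded sets).\<close>
definition loc_lipschitz_state :: "nat \<Rightarrow> ((nat \<Rightarrow> real) \<Rightarrow> real \<Rightarrow> real) \<Rightarrow> bool" where
  "loc_lipschitz_state n f \<longleftrightarrow>
     (\<forall>R>0. \<exists>L. \<forall>x\<in>vecs n. \<forall>y\<in>vecs n. \<forall>t\<in>{0..R}. \<forall>t'\<in>{0..R}.
        (\<forall>i. \<bar>x i\<bar> \<le> R \<and> \<bar>y i\<bar> \<le> R) \<longrightarrow>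
        \<bar>f x t - f y t'\<bar> \<le> L * ((\<Sum>i=1..n. \<bar>x i - y i\<bar>) + \<bar>t - t'\<bar>))"

definition char_poly :: "nat \<Rightarrow> (nat \<Rightarrow> real) \<Rightarrow> complex poly" where
  "char_poly n C = monom 1 n + (\<Sum>i=1..n. monom (complex_of_real (C i)) (i - 1))"

definition hurwitz :: "complex poly \<Rightarrow> bool" where
  "hurwitz p \<longleftrightarrow> (\<forall>z. poly p z = 0 \<longrightarrow> Re z < 0)"

text \<open>Backward recursion: alpha_aux a m = (alpha_(n-m), alpha_(n+1-m)),
  starting from (alpha_n, alpha_(n+1)) = (a, 1).\<close>
fun alpha_aux :: "real \<Rightarrow> nat \<Rightarrow> real \<times> real" where
  "alpha_aux a 0 = (a, 1)"
| "alpha_aux a (Suc m) = (let (p, q) = alpha_aux a m in (p * q / (2 * q - p), p))"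

definition alphas :: "nat \<Rightarrow> real \<Rightarrow> nat \<Rightarrow> real" where
  "alphas n a i = fst (alpha_aux a (n - i))"

text \<open>Set-valued signum (Filippov regularisation of sgn).\<close>
definition Sgn :: "real \<Rightarrow> real set" where
  "Sgn s = (if s = 0 then {-1..1} else {sgn s})"

end

theory Submission
  imports Defs "HOL-Computational_Algebra.Fundamental_Theorem_Algebra"
begin

lemma phi_close_pos:
  fixes u \<beta> :: real assumes "1/2 \<le> \<beta>" "\<beta> \<le> 1" "u \<ge> 0"
  shows "\<bar>u powr \<beta> - u\<bar> \<le> 2*(1-\<beta>)*(1+u^2)"
proof (cases "u = 0")
  case True then show ?thesis using assms by simp
next
  case False
  then have u0: "u > 0" using assms by simp
  show ?thesis
  proof (cases "u \<le> 1")
    case True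
    define t where "t = u powr \<beta>"
    have t0: "t > 0" using u0 by (simp add: t_def)
    have lnt: "ln t = \<beta> * ln u" using u0 by (simp add: t_def ln_powr)
    have ge: "u powr \<beta> \<ge> u" using True u0 assms by (metis powr_mono' powr_one_gt_zero_iff powr_one less_imp_le_nat order.refl) 
    have e1: "1 - u powr (1-\<beta>) \<le> -(1-\<beta>) * ln u"
    proof -
      have "u powr (1-\<beta>) = exp ((1-\<beta>) * ln u)" using u0 by (simp add: powr_def)
      moreover have "exp ((1-\<beta>) * ln u) \<ge> 1 + (1-\<beta>) * ln u" by (rule exp_ge_add_one_self)
      ultimately have "1 - u powr (1-\<beta>) \<le> - ((1-\<beta>) * ln u)" by linarith
      then show ?thesis by (simp add: algebra_simps)
    qed
    have lnu: "ln u \<le> 0" using True u0 by simp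
    have e2: "t * (- ln t) \<le> 1"
    proof -
      have "ln (1/t) \<le> 1/t - 1" using t0 by (intro ln_le_minus_one) simp
      then have "- ln t \<le> 1/t" using t0 by (simp add: ln_div)
      then show ?thesis using t0 by (simp add: field_simps)
    qed
    have "u powr \<beta> - u = t * (1 - u powr (1-\<beta>))"
      using u0 by (simp add: t_def algebra_simps powr_add[symmetric])
    also have "\<dots> \<le> t * (-(1-\<beta>) * ln u)" using e1 t0 by (intro mult_left_mono) auto
    also have "\<dots> = (1-\<beta>) * (t * (- ln t)) / \<beta>" using lnt assms by (simp add: field_simps)
    also have "\<dots> \<le> (1-\<beta>) * 1 / \<beta>" using e2 assms by (intro divide_right_mono mult_left_mono) auto
    also have "\<dots> \<le> 2*(1-\<beta>)"
    proof -
      have "(1-\<beta>)*1 \<le> (1-\<beta>)*(2*\<beta>)" using assms by (intro mult_left_mono) auto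
      moreover have "\<beta> > 0" using assms by simp
      ultimately show ?thesis by (simp only: pos_divide_le_eq mult.commute mult.left_commute)
    qed
    also have "\<dots> \<le> 2*(1-\<beta>)*(1+u^2)" using assms by (simp add: mult_le_cancel_left1)
    finally show ?thesis using ge by simp
  next
    case False
    then have u1: "u > 1" by simp
    have le: "u powr \<beta> \<le> u" using u1 assms by (metis powr_mono powr_one order.strict_implies_order less_trans zero_less_one)
    have e1: "1 - u powr (\<beta>-1) \<le> (1-\<beta>) * ln u"
    proof -
      have "u powr (\<beta>-1) = exp ((\<beta>-1) * ln u)" using u0 by (simp add: powr_def)
      moreover have "exp ((\<beta>-1) * ln u) \<ge> 1 + (\<beta>-1) * ln u" by (rule exp_ge_add_one_self)
      ultimately show ?thesis by (simp add: algebra_simps)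
    qed
    have lnu: "ln u \<le> u" using ln_le_minus_one[OF u0] by linarith
    have pw: "u powr \<beta> = u * u powr (\<beta>-1)"
    proof -
      have "u powr \<beta> = u powr (1 + (\<beta>-1))" by simp
      also have "\<dots> = u powr 1 * u powr (\<beta>-1)" by (rule powr_add)
      finally show ?thesis using u0 by simp
    qed
    have "u - u powr \<beta> = u * (1 - u powr (\<beta>-1))"
      using pw by (simp add: algebra_simps)
    also have "\<dots> \<le> u * ((1-\<beta>) * ln u)" using e1 u0 by (intro mult_left_mono) auto
    also have "\<dots> \<le> u * ((1-\<beta>) * u)" using lnu u0 assms by (intro mult_left_mono) auto
    also have "\<dots> \<le> 2*(1-\<beta>)*(1+u^2)"
    proof -
      have h: "0 \<le> (1-\<beta>)*(u*u)" using assms by simp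
      show ?thesis using h assms unfolding power2_eq_square by (simp add: algebra_simps)
    qed
    finally show ?thesis using le by simp
  qed
qed

lemma phi_close:
  fixes u \<beta> :: real assumes "1/2 \<le> \<beta>" "\<beta> \<le> 1"
  shows "\<bar>\<bar>u\<bar> powr \<beta> * sgn u - u\<bar> \<le> 2*(1-\<beta>)*(1+u^2)"
proof (cases "u \<ge> 0")
  case True
  then show ?thesis using phi_close_pos[OF assms True] by (cases "u = 0") auto
next
  case False
  have "\<bar>\<bar>u\<bar> powr \<beta> - \<bar>u\<bar>\<bar> \<le> 2*(1-\<beta>)*(1+\<bar>u\<bar>^2)" by (rule phi_close_pos[OF assms]) simp
  moreover have "\<bar>u\<bar> powr \<beta> * sgn u - u = -(\<bar>u\<bar> powr \<beta> - \<bar>u\<bar>)" using False by simp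
  ultimately show ?thesis by (simp only: abs_minus_cancel power2_abs)
qed

definition Lq :: "nat \<Rightarrow> complex poly \<Rightarrow> (nat \<Rightarrow> real) \<Rightarrow> complex" where
  "Lq n q y = (\<Sum>k<n. coeff q k * complex_of_real (y (Suc k)))"

definition qq :: "(nat \<Rightarrow> complex) \<Rightarrow> nat \<Rightarrow> complex poly" where
  "qq rt j = (\<Prod>i<j. [:-rt i, 1:])"

lemma qq_Suc: "qq rt (Suc j) = qq rt j * [:-rt j, 1:]"
  by (simp add: qq_def)

lemma qq_monic: "degree (qq rt j) = j \<and> coeff (qq rt j) j = 1"
proof (induction j)
  case 0 then show ?case by (simp add: qq_def)
next
  case (Suc j)
  have nz: "qq rt j \<noteq> 0" using Suc by auto
  have "degree (qq rt j * [:-rt j,1:]) = degree (qq rt j) + degree [:-rt j,1:]"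
    by (rule degree_mult_eq) (use nz in auto)
  then have "degree (qq rt (Suc j)) = Suc j" using Suc by (simp only: qq_Suc) simp
  moreover have "coeff (qq rt (Suc j)) (Suc j) = 1"
    using Suc coeff_mult_degree_sum[of "qq rt j" "[:-rt j, 1:]"] by (simp add: qq_Suc)
  ultimately show ?case by simp
qed

lemma qq_coeff_high: "j < k \<Longrightarrow> coeff (qq rt j) k = 0"
  using qq_monic[of rt j] by (simp add: coeff_eq_0)

lemma qq_pCons: "pCons 0 (qq rt j) = qq rt (Suc j) + smult (rt j) (qq rt j)"
  by (simp add: qq_Suc mult_pCons_right algebra_simps)

lemma Lq_add: "Lq n (p + q) y = Lq n p y + Lq n q y"
  by (simp add: Lq_def algebra_simps sum.distrib)

lemma Lq_smult: "Lq n (smult c q) y = c * Lq n q y"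
  by (simp add: Lq_def sum_distrib_left algebra_simps)

lemma Lq_scale: "Lq n q (\<lambda>i. c * y i) = complex_of_real c * Lq n q y"
  by (simp add: Lq_def sum_distrib_left algebra_simps)

lemma Lq_cong: "(\<And>i. 1 \<le> i \<Longrightarrow> i \<le> n \<Longrightarrow> y i = y' i) \<Longrightarrow> Lq n q y = Lq n q y'"
  unfolding Lq_def by (intro sum.cong) auto

lemma Lq_shift:
  assumes "n \<ge> 1" "\<And>k. Suc k < n \<Longrightarrow> g (Suc k) = y (Suc (Suc k))"
  shows "Lq n q g = Lq n (pCons 0 q) y + coeff q (n-1) * complex_of_real (g n)"
proof -
  obtain m where m: "n = Suc m" using assms(1) by (cases n) auto
  have "Lq n q g = (\<Sum>k<m. coeff q k * complex_of_real (g (Suc k))) + coeff q m * complex_of_real (g n)"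
    by (simp add: Lq_def m)
  also have "(\<Sum>k<m. coeff q k * complex_of_real (g (Suc k))) = (\<Sum>k<m. coeff q k * complex_of_real (y (Suc (Suc k))))"
    using assms(2) m by (intro sum.cong) auto
  also have "\<dots> = Lq n (pCons 0 q) y"
    unfolding Lq_def m by (subst sum.lessThan_Suc_shift) simp
  finally show ?thesis by (simp add: m)
qed

lemma coeff_char_poly:
  "coeff (char_poly n C) k = (if k = n then 1 else if k < n then complex_of_real (C (Suc k)) else 0)"
proof -
  have "(\<Sum>i=1..n. coeff (monom (complex_of_real (C i)) (i - 1)) k)
      = (\<Sum>i\<in>{1..n}. if i = Suc k then complex_of_real (C i) else 0)"
    by (intro sum.cong) (auto simp: coeff_monom)
  also have "\<dots> = (if k < n then complex_of_real (C (Suc k)) else 0)"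
    by (subst sum.delta) auto
  finally show ?thesis by (auto simp: char_poly_def coeff_sum coeff_monom)
qed

lemma degree_char_poly: "degree (char_poly n C) = n"
proof (rule antisym)
  show "degree (char_poly n C) \<le> n" by (rule degree_le) (simp add: coeff_char_poly)
  show "n \<le> degree (char_poly n C)" by (rule le_degree) (simp add: coeff_char_poly)
qed

lemma Lq_char_poly: "Lq n (char_poly n C) y = complex_of_real (\<Sum>i=1..n. C i * y i)"
proof -
  have "Lq n (char_poly n C) y = (\<Sum>k<n. complex_of_real (C (Suc k) * y (Suc k)))"
    unfolding Lq_def by (intro sum.cong) (auto simp: coeff_char_poly)
  also have "\<dots> = (\<Sum>i=1..n. complex_of_real (C i * y i))"
    using sum.atLeast1_atMost_eq[of "\<lambda>i. complex_of_real (C i * y i)" n] by simp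
  finally show ?thesis by simp
qed

lemma char_poly_factor:
  assumes "hurwitz (char_poly n C)"
  obtains rt where "qq rt n = char_poly n C" "\<And>i. i < n \<Longrightarrow> Re (rt i) < 0"
proof -
  obtain rt where rt: "smult (lead_coeff (char_poly n C)) (\<Prod>i<degree (char_poly n C). [:-rt i, 1:]) = char_poly n C"
    by (rule complex_poly_decompose')
  have lc: "lead_coeff (char_poly n C) = 1" by (simp add: degree_char_poly coeff_char_poly)
  have eq: "qq rt n = char_poly n C" using rt lc by (simp add: qq_def degree_char_poly)
  have "Re (rt i) < 0" if "i < n" for i
  proof -
    have "poly (qq rt n) (rt i) = (\<Prod>j<n. poly [:-rt j, 1:] (rt i))"
      by (simp add: qq_def poly_prod)
    also have "\<dots> = 0" using that by (intro prod_zero) auto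
    finally show ?thesis using assms eq unfolding hurwitz_def by auto
  qed
  then show ?thesis using eq that by blast
qed

lemma Lq_step:
  assumes n1: "n \<ge> 1" and cp: "qq rt n = char_poly n C" and j: "j < n"
    and g1: "\<And>k. Suc k < n \<Longrightarrow> g (Suc k) = y (Suc (Suc k))"
    and gn: "g n = - (\<Sum>i=1..n. C i * y i) + \<theta>"
  shows "Lq n (qq rt j) g = rt j * Lq n (qq rt j) y
           + (if Suc j < n then Lq n (qq rt (Suc j)) y else complex_of_real \<theta>)"
proof -
  have "Lq n (qq rt j) g = Lq n (qq rt (Suc j)) y + rt j * Lq n (qq rt j) y
        + coeff (qq rt j) (n-1) * complex_of_real (g n)"
    by (simp add: Lq_shift[OF n1, of g y, OF g1] qq_pCons Lq_add Lq_smult)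
  also have "\<dots> = rt j * Lq n (qq rt j) y
           + (if Suc j < n then Lq n (qq rt (Suc j)) y else complex_of_real \<theta>)"
  proof (cases "Suc j < n")
    case True
    then show ?thesis by (simp add: qq_coeff_high)
  next
    case False
    then have jn: "Suc j = n" using j by simp
    have c1: "coeff (qq rt j) (n-1) = 1" using qq_monic[of rt j] jn by auto
    show ?thesis using False c1 jn cp by (simp add: Lq_char_poly gn)
  qed
  finally show ?thesis .
qed

definition Vf :: "nat \<Rightarrow> (nat \<Rightarrow> complex) \<Rightarrow> real \<Rightarrow> (nat \<Rightarrow> real) \<Rightarrow> real" where
  "Vf n rt \<rho> y = (\<Sum>j<n. \<rho>^j * (cmod (Lq n (qq rt j) y))^2)"

definition DVf :: "nat \<Rightarrow> (nat \<Rightarrow> complex) \<Rightarrow> real \<Rightarrow> (nat \<Rightarrow> real) \<Rightarrow> (nat \<Rightarrow> real) \<Rightarrow> real" where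
  "DVf n rt \<rho> y g = (\<Sum>j<n. \<rho>^j * (2 * Re (cnj (Lq n (qq rt j) y) * Lq n (qq rt j) g)))"

definition Nf :: "nat \<Rightarrow> (nat \<Rightarrow> real) \<Rightarrow> real" where
  "Nf n y = (\<Sum>i=1..n. \<bar>y i\<bar>)"

lemma Vf_nonneg: "\<rho> \<ge> 0 \<Longrightarrow> Vf n rt \<rho> y \<ge> 0"
  unfolding Vf_def by (intro sum_nonneg) auto

lemma pointwise_ineq:
  fixes w z r :: complex and \<sigma> :: real
  assumes "\<sigma> > 0" "Re r \<le> -\<sigma>"
  shows "2 * Re (cnj w * (r * w + z)) \<le> -\<sigma> * (cmod w)^2 + (cmod z)^2 / \<sigma>"
proof -
  have a: "Re (cnj w * (r * w)) = Re r * (cmod w)^2"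
    using cmod_power2[of w] by (simp add: power2_eq_square algebra_simps)
  have b: "Re (cnj w * z) \<le> cmod w * cmod z"
    using complex_Re_le_cmod[of "cnj w * z"] by (simp add: norm_mult)
  have c: "2 * (cmod w * cmod z) \<le> \<sigma> * (cmod w)^2 + (cmod z)^2 / \<sigma>"
  proof -
    have "0 \<le> (\<sigma> * cmod w - cmod z)^2 / \<sigma>" using assms by simp
    also have "(\<sigma> * cmod w - cmod z)^2 / \<sigma> = \<sigma> * (cmod w)^2 + (cmod z)^2 / \<sigma> - 2 * (cmod w * cmod z)"
      using assms by (simp add: field_simps power2_eq_square)
    finally show ?thesis by simp
  qed
  have d: "Re r * (cmod w)^2 \<le> -\<sigma> * (cmod w)^2" using assms by (intro mult_right_mono) auto
  have "2 * Re (cnj w * (r * w + z)) = 2 * (Re r * (cmod w)^2) + 2 * Re (cnj w * z)"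
    using a by (simp add: distrib_left)
  then show ?thesis using b c d by linarith
qed

lemma DV_bound:
  assumes n1: "n \<ge> 1" and s0: "\<sigma> > 0" and r1: "\<rho> \<ge> 1" and rs: "\<rho> * \<sigma>^2 \<ge> 2"
    and rt: "\<And>j. j < n \<Longrightarrow> Re (rt j) \<le> -\<sigma>"
    and st: "\<And>j. j < n \<Longrightarrow> Lq n (qq rt j) g = rt j * Lq n (qq rt j) y
           + (if Suc j < n then Lq n (qq rt (Suc j)) y else complex_of_real \<theta>)"
  shows "DVf n rt \<rho> y g \<le> -(\<sigma>/2) * Vf n rt \<rho> y + \<rho>^(n-1) * \<theta>^2 / \<sigma>"
proof -
  define w where "w j = Lq n (qq rt j) y" for j
  define z where "z j = (if Suc j < n then w (Suc j) else complex_of_real \<theta>)" for j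
  obtain m where m: "n = Suc m" using n1 by (cases n) auto
  have r0: "\<rho> > 0" using r1 by simp
  have "DVf n rt \<rho> y g = (\<Sum>j<n. \<rho>^j * (2 * Re (cnj (w j) * (rt j * w j + z j))))"
    unfolding DVf_def using st by (intro sum.cong) (auto simp: w_def z_def)
  also have "\<dots> \<le> (\<Sum>j<n. \<rho>^j * (-\<sigma> * (cmod (w j))^2 + (cmod (z j))^2 / \<sigma>))"
    using r0 by (intro sum_mono mult_left_mono pointwise_ineq s0 rt) auto
  also have "\<dots> = (\<Sum>j<n. -\<sigma> * (\<rho>^j * (cmod (w j))^2)) + (\<Sum>j<n. \<rho>^j * (cmod (z j))^2 / \<sigma>)"
    by (simp only: sum.distrib[symmetric]) (intro sum.cong; simp add: algebra_simps)
  also have "(\<Sum>j<n. -\<sigma> * (\<rho>^j * (cmod (w j))^2)) = -\<sigma> * Vf n rt \<rho> y"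
    by (simp add: Vf_def w_def sum_distrib_left)
  also have "(\<Sum>j<n. \<rho>^j * (cmod (z j))^2 / \<sigma>)
      = (\<Sum>j<m. \<rho>^j * (cmod (w (Suc j)))^2 / \<sigma>) + \<rho>^m * \<theta>^2 / \<sigma>"
    by (simp add: m z_def)
  also have "(\<Sum>j<m. \<rho>^j * (cmod (w (Suc j)))^2 / \<sigma>) \<le> (\<Sum>j<m. (\<sigma>/2) * (\<rho>^(Suc j) * (cmod (w (Suc j)))^2))"
  proof (intro sum_mono)
    fix j
    have "\<rho>^j / \<sigma> \<le> (\<sigma>/2) * \<rho>^(Suc j)"
    proof -
      have "\<rho>^j * 2 \<le> \<rho>^j * (\<rho> * \<sigma>^2)" using rs r0 by (intro mult_left_mono) auto
      then show ?thesis using s0 by (simp add: field_simps power2_eq_square)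
    qed
    then have "\<rho>^j / \<sigma> * (cmod (w (Suc j)))^2 \<le> (\<sigma>/2) * \<rho>^(Suc j) * (cmod (w (Suc j)))^2"
      by (intro mult_right_mono) auto
    then show "\<rho>^j * (cmod (w (Suc j)))^2 / \<sigma> \<le> (\<sigma>/2) * (\<rho>^(Suc j) * (cmod (w (Suc j)))^2)"
      by (simp add: algebra_simps)
  qed
  also have "\<dots> \<le> (\<sigma>/2) * Vf n rt \<rho> y"
  proof -
    have "(\<Sum>j<m. \<rho>^(Suc j) * (cmod (w (Suc j)))^2) \<le> \<rho>^0 * (cmod (w 0))^2 + (\<Sum>j<m. \<rho>^(Suc j) * (cmod (w (Suc j)))^2)"
      by simp
    also have "\<dots> = Vf n rt \<rho> y"
      unfolding Vf_def m w_def by (subst sum.lessThan_Suc_shift) simp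
    finally have S: "(\<Sum>j<m. \<rho>^(Suc j) * (cmod (w (Suc j)))^2) \<le> Vf n rt \<rho> y" .
    show ?thesis by (simp only: sum_distrib_left[symmetric]) (rule mult_left_mono[OF S]; use s0 in simp)
  qed
  finally show ?thesis using m by simp
qed

definition Bm :: "nat \<Rightarrow> (nat \<Rightarrow> complex) \<Rightarrow> real" where
  "Bm n rt = (\<Sum>j<n. \<Sum>k<n. cmod (coeff (qq rt j) k))"

lemma Nf_alt: "Nf n y = (\<Sum>k<n. \<bar>y (Suc k)\<bar>)"
  unfolding Nf_def using sum.atLeast1_atMost_eq[of "\<lambda>i. \<bar>y i\<bar>" n] by simp

lemma Nf_nonneg: "Nf n y \<ge> 0" unfolding Nf_def by (intro sum_nonneg) auto

lemma abs_le_Nf: "1 \<le> i \<Longrightarrow> i \<le> n \<Longrightarrow> \<bar>y i\<bar> \<le> Nf n y"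
  unfolding Nf_def by (rule member_le_sum) auto

lemma Bm_ge: "j < n \<Longrightarrow> k < n \<Longrightarrow> cmod (coeff (qq rt j) k) \<le> Bm n rt"
proof -
  assume a: "j < n" "k < n"
  have "cmod (coeff (qq rt j) k) \<le> (\<Sum>k<n. cmod (coeff (qq rt j) k))"
    using a by (intro member_le_sum) auto
  also have "\<dots> \<le> Bm n rt" unfolding Bm_def using a
    by (intro member_le_sum[where f="\<lambda>j. \<Sum>k<n. cmod (coeff (qq rt j) k)"]) (auto intro: sum_nonneg)
  finally show ?thesis .
qed

lemma Bm_row: "j < n \<Longrightarrow> (\<Sum>k<n. cmod (coeff (qq rt j) k)) \<le> Bm n rt"
  unfolding Bm_def by (intro member_le_sum[where f="\<lambda>j. \<Sum>k<n. cmod (coeff (qq rt j) k)"]) (auto intro: sum_nonneg)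

lemma Bm_nonneg: "Bm n rt \<ge> 0" unfolding Bm_def by (intro sum_nonneg) auto

lemma Lq_bound: "cmod (Lq n q y) \<le> (\<Sum>k<n. cmod (coeff q k)) * Nf n y"
proof -
  have "cmod (Lq n q y) \<le> (\<Sum>k<n. cmod (coeff q k) * \<bar>y (Suc k)\<bar>)"
    unfolding Lq_def by (rule order.trans[OF norm_sum]) (simp add: norm_mult)
  also have "\<dots> \<le> (\<Sum>k<n. cmod (coeff q k) * Nf n y)"
    by (intro sum_mono mult_left_mono abs_le_Nf) auto
  finally show ?thesis by (simp add: sum_distrib_right)
qed

lemma V_upper:
  assumes "\<rho> \<ge> 0"
  shows "Vf n rt \<rho> y \<le> (\<Sum>j<n. \<rho>^j) * (Bm n rt)^2 * (Nf n y)^2"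
proof -
  have "Vf n rt \<rho> y \<le> (\<Sum>j<n. \<rho>^j * (Bm n rt * Nf n y)^2)"
    unfolding Vf_def
  proof (intro sum_mono mult_left_mono)
    fix j assume j: "j \<in> {..<n}"
    have "cmod (Lq n (qq rt j) y) \<le> Bm n rt * Nf n y"
      using Lq_bound[of n "qq rt j" y] Bm_row[of j n rt] j Nf_nonneg[of n y]
      by (meson lessThan_iff mult_right_mono order.trans)
    then show "(cmod (Lq n (qq rt j) y))^2 \<le> (Bm n rt * Nf n y)^2"
      by (intro power_mono) auto
  qed (use assms in auto)
  also have "\<dots> = (\<Sum>j<n. \<rho>^j) * (Bm n rt)^2 * (Nf n y)^2"
    by (simp add: sum_distrib_right power_mult_distrib mult.assoc)
  finally show ?thesis .
qed

lemma V_lower: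
  assumes r1: "\<rho> \<ge> 1"
  shows "(Nf n y)^2 \<le> ((1 + Bm n rt)^n * real n)^2 * Vf n rt \<rho> y"
proof -
  define B where "B = Bm n rt"
  define V where "V = Vf n rt \<rho> y"
  define w where "w j = Lq n (qq rt j) y" for j
  have B0: "B \<ge> 0" using Bm_nonneg by (simp add: B_def)
  have V0: "V \<ge> 0" using Vf_nonneg r1 by (simp add: V_def)
  have wV: "cmod (w j) \<le> sqrt V" if "j < n" for j
  proof -
    have "1 \<le> \<rho>^j" by (rule one_le_power[OF r1])
    then have "(cmod (w j))^2 \<le> \<rho>^j * (cmod (w j))^2"
      using mult_right_mono[of 1 "\<rho>^j" "(cmod (w j))^2"] by simp
    also have "\<dots> \<le> V" unfolding V_def Vf_def w_def using that r1
      by (intro member_le_sum[where f="\<lambda>j. \<rho>^j * (cmod (Lq n (qq rt j) y))^2"]) auto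
    finally show ?thesis by (simp add: real_le_rsqrt)
  qed
  have yj: "\<bar>y (Suc j)\<bar> \<le> cmod (w j) + B * (\<Sum>k<j. \<bar>y (Suc k)\<bar>)" if j: "j < n" for j
  proof -
    have "w j = (\<Sum>k<Suc j. coeff (qq rt j) k * complex_of_real (y (Suc k)))"
      unfolding w_def Lq_def using j
      by (intro sum.mono_neutral_right) (auto simp: qq_coeff_high)
    also have "\<dots> = (\<Sum>k<j. coeff (qq rt j) k * complex_of_real (y (Suc k))) + complex_of_real (y (Suc j))"
      using qq_monic[of rt j] by simp
    finally have "complex_of_real (y (Suc j)) = w j - (\<Sum>k<j. coeff (qq rt j) k * complex_of_real (y (Suc k)))"
      by simp
    then have "\<bar>y (Suc j)\<bar> = cmod (w j - (\<Sum>k<j. coeff (qq rt j) k * complex_of_real (y (Suc k))))"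
      by (metis norm_of_real)
    also have "\<dots> \<le> cmod (w j) + cmod (\<Sum>k<j. coeff (qq rt j) k * complex_of_real (y (Suc k)))"
      by (rule norm_triangle_ineq4)
    also have "cmod (\<Sum>k<j. coeff (qq rt j) k * complex_of_real (y (Suc k))) \<le> (\<Sum>k<j. B * \<bar>y (Suc k)\<bar>)"
    proof (rule order.trans[OF norm_sum], intro sum_mono)
      fix k assume "k \<in> {..<j}"
      then have "cmod (coeff (qq rt j) k) \<le> B" using j Bm_ge[of j n k rt] by (simp add: B_def)
      then show "cmod (coeff (qq rt j) k * complex_of_real (y (Suc k))) \<le> B * \<bar>y (Suc k)\<bar>"
        by (simp add: norm_mult mult_right_mono)
    qed
    finally show ?thesis by (simp add: sum_distrib_left)
  qed
  have ind: "j \<le> n \<Longrightarrow> (\<Sum>k<j. \<bar>y (Suc k)\<bar>) \<le> (1+B)^j * (\<Sum>i<j. cmod (w i))" for j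
  proof (induction j)
    case 0 then show ?case by simp
  next
    case (Suc j)
    then have IH: "(\<Sum>k<j. \<bar>y (Suc k)\<bar>) \<le> (1+B)^j * (\<Sum>i<j. cmod (w i))" by simp
    have "(\<Sum>k<Suc j. \<bar>y (Suc k)\<bar>) = (\<Sum>k<j. \<bar>y (Suc k)\<bar>) + \<bar>y (Suc j)\<bar>" by simp
    also have "\<dots> \<le> (1+B) * (\<Sum>k<j. \<bar>y (Suc k)\<bar>) + cmod (w j)"
      using yj[of j] Suc.prems by (simp add: algebra_simps)
    also have "\<dots> \<le> (1+B) * ((1+B)^j * (\<Sum>i<j. cmod (w i))) + cmod (w j)"
      using IH B0 by (intro add_right_mono mult_left_mono) auto
    also have "\<dots> \<le> (1+B)^(Suc j) * (\<Sum>i<j. cmod (w i)) + (1+B)^(Suc j) * cmod (w j)"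
    proof -
      have "1 \<le> (1+B)^(Suc j)" using B0 by (intro one_le_power) simp
      then have "cmod (w j) \<le> (1+B)^(Suc j) * cmod (w j)"
        using mult_right_mono[of 1 "(1+B)^(Suc j)" "cmod (w j)"] by simp
      then show ?thesis by (simp add: algebra_simps)
    qed
    also have "\<dots> = (1+B)^(Suc j) * (\<Sum>i<Suc j. cmod (w i))" by (simp add: algebra_simps)
    finally show ?case .
  qed
  have "Nf n y \<le> (1+B)^n * (\<Sum>i<n. cmod (w i))" using ind[of n] by (simp add: Nf_alt)
  also have "\<dots> \<le> (1+B)^n * (\<Sum>i<n. sqrt V)"
    using B0 wV by (intro mult_left_mono sum_mono) auto
  also have "\<dots> = (1+B)^n * real n * sqrt V" by simp
  finally have "(Nf n y)^2 \<le> ((1+B)^n * real n * sqrt V)^2"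
    using Nf_nonneg by (intro power_mono) auto
  also have "\<dots> = ((1+B)^n * real n)^2 * V" using V0 by (simp add: power_mult_distrib)
  finally show ?thesis by (simp add: B_def V_def)
qed

definition rr :: "nat \<Rightarrow> real \<Rightarrow> nat \<Rightarrow> real" where
  "rr n \<delta> i = 1 + real (n + 1 - i) * \<delta>"

definition phi :: "real \<Rightarrow> real \<Rightarrow> real" where
  "phi \<beta> u = \<bar>u\<bar> powr \<beta> * sgn u"

definition Fv :: "nat \<Rightarrow> (nat \<Rightarrow> real) \<Rightarrow> real \<Rightarrow> (nat \<Rightarrow> real) \<Rightarrow> (nat \<Rightarrow> real)" where
  "Fv n C \<delta> y = (\<lambda>i. if i < n then y (Suc i) else - (\<Sum>j=1..n. C j * phi (1 / rr n \<delta> j) (y j)))"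

definition dil :: "nat \<Rightarrow> real \<Rightarrow> real \<Rightarrow> (nat \<Rightarrow> real) \<Rightarrow> (nat \<Rightarrow> real)" where
  "dil n \<delta> \<mu> y = (\<lambda>i. \<mu> powr rr n \<delta> i * y i)"

lemma rr_pos: "\<delta> \<ge> 0 \<Longrightarrow> rr n \<delta> i > 0"
  unfolding rr_def by (intro add_pos_nonneg) auto

lemma phi_hom:
  assumes "\<mu> > 0" "r > 0"
  shows "phi (1/r) (\<mu> powr r * u) = \<mu> * phi (1/r) u"
proof -
  have "\<bar>\<mu> powr r * u\<bar> powr (1/r) = (\<mu> powr r) powr (1/r) * \<bar>u\<bar> powr (1/r)"
    using assms by (simp add: abs_mult powr_mult)
  also have "(\<mu> powr r) powr (1/r) = \<mu>" using assms by (simp add: powr_powr)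
  finally show ?thesis using assms by (simp add: phi_def sgn_mult)
qed

lemma Fv_hom:
  assumes "\<mu> > 0" "\<delta> \<ge> 0" "1 \<le> i" "i \<le> n"
  shows "dil n \<delta> \<mu> (Fv n C \<delta> y) i = \<mu> powr \<delta> * Fv n C \<delta> (dil n \<delta> \<mu> y) i"
proof (cases "i < n")
  case True
  have "rr n \<delta> i = \<delta> + rr n \<delta> (Suc i)" using True by (simp add: rr_def Suc_diff_le algebra_simps)
  then have "\<mu> powr rr n \<delta> i = \<mu> powr \<delta> * \<mu> powr rr n \<delta> (Suc i)" by (simp add: powr_add)
  then show ?thesis using True by (simp add: dil_def Fv_def)
next
  case False
  then have i: "i = n" using assms by simp
  have rn: "rr n \<delta> n = 1 + \<delta>" by (simp add: rr_def)
  have "(\<Sum>j=1..n. C j * phi (1 / rr n \<delta> j) (\<mu> powr rr n \<delta> j * y j))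
      = \<mu> * (\<Sum>j=1..n. C j * phi (1 / rr n \<delta> j) (y j))"
  proof -
    have h: "\<And>j. phi (1/rr n \<delta> j) (\<mu> powr rr n \<delta> j * y j) = \<mu> * phi (1/rr n \<delta> j) (y j)"
      by (rule phi_hom[OF assms(1) rr_pos[OF assms(2)]])
    show ?thesis by (simp only: h) (simp add: sum_distrib_left algebra_simps)
  qed
  moreover have "\<mu> powr (1 + \<delta>) = \<mu> powr \<delta> * \<mu>" using assms by (simp add: powr_add)
  ultimately show ?thesis using i rn by (simp add: dil_def Fv_def)
qed

lemma DVf_scale: "DVf n rt \<rho> y (\<lambda>i. c * g i) = c * DVf n rt \<rho> y g"
  by (simp add: DVf_def Lq_scale sum_distrib_left algebra_simps)

lemma DVf_cong: "(\<And>i. 1 \<le> i \<Longrightarrow> i \<le> n \<Longrightarrow> g i = g' i) \<Longrightarrow> DVf n rt \<rho> y g = DVf n rt \<rho> y g'"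
  unfolding DVf_def using Lq_cong[of n g g'] by simp

lemma Vf_cong: "(\<And>i. 1 \<le> i \<Longrightarrow> i \<le> n \<Longrightarrow> g i = g' i) \<Longrightarrow> Vf n rt \<rho> g = Vf n rt \<rho> g'"
  unfolding Vf_def using Lq_cong[of n g g'] by simp

lemma DVf_hom:
  assumes "\<mu> > 0" "\<delta> \<ge> 0"
  shows "DVf n rt \<rho> y (dil n \<delta> \<mu> (Fv n C \<delta> x)) = \<mu> powr \<delta> * DVf n rt \<rho> y (Fv n C \<delta> (dil n \<delta> \<mu> x))"
proof -
  have "DVf n rt \<rho> y (dil n \<delta> \<mu> (Fv n C \<delta> x)) = DVf n rt \<rho> y (\<lambda>i. \<mu> powr \<delta> * Fv n C \<delta> (dil n \<delta> \<mu> x) i)"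
    by (rule DVf_cong) (simp add: Fv_hom[OF assms])
  then show ?thesis by (simp add: DVf_scale)
qed

lemma Lq_Re: "Re (Lq n q y) = (\<Sum>k<n. Re (coeff q k) * y (Suc k))"
  by (simp add: Lq_def)

lemma Lq_Im: "Im (Lq n q y) = (\<Sum>k<n. Im (coeff q k) * y (Suc k))"
  by (simp add: Lq_def)

lemma Vf_deriv:
  assumes d: "\<And>i. 1 \<le> i \<Longrightarrow> i \<le> n \<Longrightarrow> ((\<lambda>t. x t i) has_real_derivative x' i) (at t)"
  shows "((\<lambda>t. Vf n rt \<rho> (x t)) has_real_derivative DVf n rt \<rho> (x t) x') (at t)"
proof -
  have dre: "((\<lambda>t. Re (Lq n q (x t))) has_real_derivative Re (Lq n q x')) (at t)" for q
    unfolding Lq_Re by (intro DERIV_sum DERIV_cmult d) auto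
  have dim: "((\<lambda>t. Im (Lq n q (x t))) has_real_derivative Im (Lq n q x')) (at t)" for q
    unfolding Lq_Im by (intro DERIV_sum DERIV_cmult d) auto
  have e1: "Vf n rt \<rho> (x s) = (\<Sum>j<n. \<rho>^j * (Re (Lq n (qq rt j) (x s)) * Re (Lq n (qq rt j) (x s))
        + Im (Lq n (qq rt j) (x s)) * Im (Lq n (qq rt j) (x s))))" for s
    unfolding Vf_def cmod_power2 by (simp add: power2_eq_square)
  have e2: "DVf n rt \<rho> (x t) x' = (\<Sum>j<n. \<rho>^j * (Re (Lq n (qq rt j) x') * Re (Lq n (qq rt j) (x t))
        + Re (Lq n (qq rt j) x') * Re (Lq n (qq rt j) (x t))
        + (Im (Lq n (qq rt j) x') * Im (Lq n (qq rt j) (x t))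
        + Im (Lq n (qq rt j) x') * Im (Lq n (qq rt j) (x t)))))"
    unfolding DVf_def by (intro sum.cong) (auto simp: algebra_simps)
  show ?thesis unfolding e1 e2
    by (intro DERIV_sum DERIV_cmult DERIV_add DERIV_mult dre dim)
qed

locale ftsys =
  fixes n :: nat and C :: "nat \<Rightarrow> real" and rt :: "nat \<Rightarrow> complex" and \<sigma> :: real
  assumes n1: "n \<ge> 1" and cp: "qq rt n = char_poly n C" and s0: "\<sigma> > 0"
    and rts: "\<And>j. j < n \<Longrightarrow> Re (rt j) \<le> -\<sigma>"
begin

definition "rho = max 1 (2/\<sigma>^2)"
definition "Lam = (\<Sum>j<n. rho^j) * (Bm n rt)^2"
definition "KK = ((1 + Bm n rt)^n * real n)^2"
definition "v0 = 1/(16*(Lam+1)*(KK+1))"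
definition "Th = (\<Sum>i=1..n. \<bar>C i\<bar>) * 2 * real n * (1 + 2*KK)"
definition "dz = min (1/real n) (\<sigma>^2 * v0 / (4 * rho^(n-1) * (Th^2+1)))"
definition "c1 = \<sigma> * v0/4"

abbreviation "VV \<equiv> Vf n rt rho"
abbreviation "DV \<equiv> DVf n rt rho"

lemma rho1: "rho \<ge> 1" by (simp add: rho_def)
lemma rho_s: "rho * \<sigma>^2 \<ge> 2"
proof -
  have "rho \<ge> 2/\<sigma>^2" by (simp add: rho_def)
  then show ?thesis using s0 by (simp add: field_simps)
qed
lemma Lam0: "Lam \<ge> 0" unfolding Lam_def using rho1 by (intro mult_nonneg_nonneg sum_nonneg) auto
lemma KK0: "KK \<ge> 0" unfolding KK_def by simp
lemma v0pos: "v0 > 0" using Lam0 KK0 unfolding v0_def by simp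
lemma v0le: "v0 \<le> 1"
proof -
  have p: "0 \<le> Lam*KK" using Lam0 KK0 by simp
  have "(Lam+1)*(KK+1) = Lam*KK + Lam + KK + 1" by (simp add: algebra_simps)
  then have "1 \<le> (Lam+1)*(KK+1)" using p Lam0 KK0 by linarith
  moreover have "16*(Lam+1)*(KK+1) = 16*((Lam+1)*(KK+1))" by simp
  ultimately have X: "1 \<le> 16*(Lam+1)*(KK+1)" by linarith
  have "1/(16*(Lam+1)*(KK+1)) \<le> 1/1" by (rule divide_left_mono) (use X in auto)
  then show ?thesis unfolding v0_def by simp
qed
lemma Th0: "Th \<ge> 0" unfolding Th_def using KK0 by (intro mult_nonneg_nonneg sum_nonneg) auto
lemma Th2pos: "Th^2 + 1 > 0"
proof -
  have "0 \<le> Th^2" by simp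
  then show ?thesis by linarith
qed
lemma dzpos: "dz > 0" unfolding dz_def using n1 s0 v0pos Th2pos rho1 by (auto intro!: divide_pos_pos mult_pos_pos)
lemma c1pos: "c1 > 0" unfolding c1_def using s0 v0pos by simp

lemma V_nonneg: "VV y \<ge> 0" using Vf_nonneg rho1 by simp

lemma N_le_V: "(Nf n y)^2 \<le> KK * VV y"
  using V_lower[OF rho1, of n y rt] by (simp add: KK_def)

lemma V_le_N: "VV y \<le> Lam * (Nf n y)^2"
  using V_upper[of rho n rt y] rho1 by (simp add: Lam_def)

lemma comp_sq_le: "1 \<le> i \<Longrightarrow> i \<le> n \<Longrightarrow> (y i)^2 \<le> KK * VV y"
proof -
  assume "1 \<le> i" "i \<le> n"
  then have "\<bar>y i\<bar> \<le> Nf n y" by (rule abs_le_Nf)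
  then have "(y i)^2 \<le> (Nf n y)^2" by (metis abs_ge_zero power2_abs power_mono)
  then show ?thesis using N_le_V[of y] by simp
qed

lemma dz_le: "dz \<le> 1/real n" unfolding dz_def by simp

lemma rr_bounds:
  assumes d: "0 \<le> \<delta>" "\<delta> \<le> dz" and i: "1 \<le> i"
  shows "1 \<le> rr n \<delta> i" "rr n \<delta> i \<le> 2" "rr n \<delta> i - 1 \<le> real n * \<delta>"
proof -
  have "\<delta> \<le> 1/real n" using d dz_le by simp
  then have nd: "real n * \<delta> \<le> 1" using n1 by (simp add: field_simps)
  have le: "real (n+1-i) * \<delta> \<le> real n * \<delta>"
    using d i by (intro mult_right_mono) auto
  show "1 \<le> rr n \<delta> i" using d by (simp add: rr_def)
  show "rr n \<delta> i \<le> 2" using le nd by (simp add: rr_def)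
  show "rr n \<delta> i - 1 \<le> real n * \<delta>" using le by (simp add: rr_def)
qed

lemma theta_bound:
  assumes d: "0 \<le> \<delta>" "\<delta> \<le> dz" and V2: "VV y \<le> 2"
  shows "\<bar>\<Sum>i=1..n. C i * (phi (1 / rr n \<delta> i) (y i) - y i)\<bar> \<le> \<delta> * Th"
proof -
  have "\<bar>\<Sum>i=1..n. C i * (phi (1 / rr n \<delta> i) (y i) - y i)\<bar>
      \<le> (\<Sum>i=1..n. \<bar>C i\<bar> * \<bar>phi (1 / rr n \<delta> i) (y i) - y i\<bar>)"
    by (rule order.trans[OF sum_abs]) (simp add: abs_mult)
  also have "\<dots> \<le> (\<Sum>i=1..n. \<bar>C i\<bar> * (2 * real n * (1 + 2*KK) * \<delta>))"
  proof (intro sum_mono mult_left_mono)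
    fix i assume "i \<in> {1..n}"
    then have i: "1 \<le> i" "i \<le> n" by auto
    define r where "r = rr n \<delta> i"
    have r: "1 \<le> r" "r \<le> 2" "r - 1 \<le> real n * \<delta>" using rr_bounds[OF d i(1)] by (auto simp: r_def)
    have b1: "1/2 \<le> 1/r" "1/r \<le> 1" using r by (auto simp: field_simps)
    have pc: "\<bar>phi (1/r) (y i) - y i\<bar> \<le> 2*(1-1/r)*(1+(y i)^2)"
      unfolding phi_def by (rule phi_close[OF b1])
    have "1 - 1/r \<le> r - 1"
    proof -
      have "(r-1) * 1 \<le> (r-1) * r" using r by (intro mult_left_mono) auto
      then show ?thesis using r by (simp add: field_simps)
    qed
    then have a1: "1 - 1/r \<le> real n * \<delta>" using r by simp
    have a2: "(y i)^2 \<le> 2*KK" using comp_sq_le[OF i, of y] mult_left_mono[OF V2 KK0]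
      by linarith
    have "2*(1-1/r)*(1+(y i)^2) \<le> 2*(real n * \<delta>)*(1+2*KK)"
      using a1 a2 b1 by (intro mult_mono) auto
    with pc show "\<bar>phi (1 / rr n \<delta> i) (y i) - y i\<bar> \<le> 2 * real n * (1 + 2*KK) * \<delta>"
      by (simp add: r_def algebra_simps)
  qed simp
  also have "\<dots> = \<delta> * Th" by (simp only: sum_distrib_right[symmetric]) (simp add: Th_def algebra_simps)
  finally show ?thesis .
qed

lemma key_E:
  assumes d: "0 \<le> \<delta>" "\<delta> \<le> dz" and V1: "v0 \<le> VV y" and V2: "VV y \<le> 2"
  shows "DV y (Fv n C \<delta> y) \<le> -c1"
proof -
  define \<theta> where "\<theta> = - (\<Sum>i=1..n. C i * (phi (1 / rr n \<delta> i) (y i) - y i))"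
  have g1: "Fv n C \<delta> y (Suc k) = y (Suc (Suc k))" if "Suc k < n" for k
    using that by (simp add: Fv_def)
  have gn: "Fv n C \<delta> y n = - (\<Sum>i=1..n. C i * y i) + \<theta>"
    by (simp add: Fv_def \<theta>_def sum_subtractf algebra_simps)
  have st: "Lq n (qq rt j) (Fv n C \<delta> y) = rt j * Lq n (qq rt j) y
           + (if Suc j < n then Lq n (qq rt (Suc j)) y else complex_of_real \<theta>)" if "j < n" for j
    by (rule Lq_step[OF n1 cp that g1 gn])
  have DB: "DV y (Fv n C \<delta> y) \<le> -(\<sigma>/2) * VV y + rho^(n-1) * \<theta>^2 / \<sigma>"
    by (rule DV_bound[OF n1 s0 rho1 rho_s rts st])
  have tb: "\<bar>\<theta>\<bar> \<le> \<delta> * Th" using theta_bound[OF d V2] by (simp add: \<theta>_def)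
  have "1/real n \<le> 1" using n1 by simp
  then have d1: "\<delta> \<le> 1" using d dz_le by linarith
  have "\<theta>^2 \<le> (\<delta> * Th)^2" using tb by (metis abs_ge_zero power2_abs power_mono)
  also have "\<dots> = \<delta> * (\<delta> * Th^2)" by (simp add: power2_eq_square)
  also have "\<dots> \<le> \<delta> * (Th^2+1)"
  proof -
    have "\<delta> * Th^2 \<le> Th^2" using d d1 by (intro mult_left_le_one_le) auto
    then show ?thesis using d by (intro mult_left_mono) auto
  qed
  also have "\<dots> \<le> \<sigma>^2 * v0 / (4 * rho^(n-1) * (Th^2+1)) * (Th^2+1)"
    using d unfolding dz_def by (intro mult_right_mono) auto
  also have "\<dots> = \<sigma>^2 * v0 / (4 * rho^(n-1))" using Th2pos by simp
  finally have t2: "\<theta>^2 \<le> \<sigma>^2 * v0 / (4 * rho^(n-1))" .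
  have rp: "rho^(n-1) > 0" using rho1 by simp
  have "rho^(n-1) * \<theta>^2 / \<sigma> \<le> rho^(n-1) * (\<sigma>^2 * v0 / (4 * rho^(n-1))) / \<sigma>"
    using t2 rp s0 by (intro divide_right_mono mult_left_mono) auto
  also have "\<dots> = \<sigma> * v0 / 4"
  proof -
    have "rho \<noteq> 0" using rho1 by simp
    then show ?thesis using rp s0 by (simp add: field_simps power2_eq_square)
  qed
  finally have t3: "rho^(n-1) * \<theta>^2 / \<sigma> \<le> \<sigma> * v0 / 4" .
  have "-(\<sigma>/2) * VV y \<le> -(\<sigma>/2) * v0" using V1 s0 by simp
  then show ?thesis using DB t3 unfolding c1_def by linarith
qed

end

lemma mvt_bound:
  fixes h :: "real \<Rightarrow> real"
  assumes ab: "a < b" and cont: "continuous_on {a..b} h"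
    and der: "\<And>t. a < t \<Longrightarrow> t < b \<Longrightarrow> (h has_real_derivative h' t) (at t)"
    and le: "\<And>t. a < t \<Longrightarrow> t < b \<Longrightarrow> h' t \<le> M"
  shows "h b - h a \<le> M * (b - a)"
proof -
  have "h differentiable (at t)" if "a < t" "t < b" for t
    using der[OF that] unfolding differentiable_def by (blast dest: has_field_derivative_imp_has_derivative)
  then obtain l z where z: "a < z" "z < b" "DERIV h z :> l" "h b - h a = (b - a) * l"
    using MVT[OF ab cont] by blast
  have "l = h' z" using DERIV_unique[OF z(3) der[OF z(1,2)]] .
  then have "l \<le> M" using le[OF z(1,2)] by simp
  then show ?thesis using z(4) ab by (simp add: mult.commute mult_left_mono)
qed

lemma barrier:
  fixes h :: "real \<Rightarrow> real"
  assumes ab: "a \<le> b" and cont: "continuous_on {a..b} h"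
    and der: "\<And>t. a < t \<Longrightarrow> t < b \<Longrightarrow> (h has_real_derivative h' t) (at t)"
    and neg: "\<And>t. a < t \<Longrightarrow> t < b \<Longrightarrow> 1 < h t \<Longrightarrow> h t < 2 \<Longrightarrow> h' t \<le> 0"
    and ha: "h a \<le> 1"
  shows "h b \<le> 1"
proof (rule ccontr)
  assume hb: "\<not> h b \<le> 1"
  define S where "S = {a..b} \<inter> h -` {..1}"
  have cl: "closed S" unfolding S_def by (rule continuous_closed_preimage[OF cont]) auto
  have aS: "a \<in> S" using ab ha by (simp add: S_def)
  have bdd: "bdd_above S" unfolding S_def by (rule bdd_aboveI[of _ b]) auto
  define s where "s = Sup S"
  have sS: "s \<in> S" unfolding s_def using closed_contains_Sup[OF _ bdd cl] aS by blast
  then have s1: "a \<le> s" "s \<le> b" "h s \<le> 1" by (auto simp: S_def)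
  have sb: "s < b" using s1 hb by (metis order.order_iff_strict)
  have above: "1 < h t" if "s < t" "t \<le> b" for t
  proof (rule ccontr)
    assume "\<not> 1 < h t"
    then have "t \<in> S" using that s1 by (auto simp: S_def)
    then have "t \<le> s" unfolding s_def by (rule cSup_upper[OF _ bdd])
    then show False using that by simp
  qed
  have "s \<in> {a..b}" using s1 by simp
  then obtain d where d: "d > 0" "\<And>t. t \<in> {a..b} \<Longrightarrow> dist t s < d \<Longrightarrow> dist (h t) (h s) < 1"
    using cont unfolding continuous_on_iff by (metis zero_less_one)
  define t' where "t' = min b (s + d/2)"
  have t': "s < t'" "t' \<le> b" using sb d by (auto simp: t'_def)
  have "h t' - h s \<le> 0 * (t' - s)"
  proof (rule mvt_bound[OF t'(1)])
    show "continuous_on {s..t'} h" by (rule continuous_on_subset[OF cont]) (use s1 t' in auto)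
    fix t assume t: "s < t" "t < t'"
    show "(h has_real_derivative h' t) (at t)" using t t' s1 by (intro der) auto
    have tab: "t \<in> {a..b}" using t t' s1 by auto
    have "dist t s < d" using t d by (auto simp: t'_def dist_real_def)
    then have "dist (h t) (h s) < 1" using d(2) tab by blast
    then have "h t < 2" using s1 by (auto simp: dist_real_def)
    then show "h' t \<le> 0" using t t' s1 above[of t] by (intro neg) auto
  qed
  then have "h t' \<le> 1" using s1 by simp
  then show False using above[OF t'] by simp
qed

context ftsys begin

lemma VV_cont:
  assumes "\<And>i. 1 \<le> i \<Longrightarrow> i \<le> n \<Longrightarrow> continuous_on S (\<lambda>t. y t i)"
  shows "continuous_on S (\<lambda>t. VV (y t))"
proof -
  have e1: "VV (y s) = (\<Sum>j<n. rho^j * (Re (Lq n (qq rt j) (y s)) * Re (Lq n (qq rt j) (y s))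
        + Im (Lq n (qq rt j) (y s)) * Im (Lq n (qq rt j) (y s))))" for s
    unfolding Vf_def cmod_power2 by (simp add: power2_eq_square)
  have c: "continuous_on S (\<lambda>t. y t (Suc k))" if "k < n" for k using assms that by auto
  show ?thesis unfolding e1 Lq_Re Lq_Im
    by (intro continuous_intros c) auto
qed

lemma dil_dil: "a > 0 \<Longrightarrow> b > 0 \<Longrightarrow> dil n \<delta> a (dil n \<delta> b y) = dil n \<delta> (a*b) y"
  by (simp add: dil_def powr_mult mult.assoc)

lemma N_dil:
  assumes "\<mu> > 0" "\<And>i. 1 \<le> i \<Longrightarrow> i \<le> n \<Longrightarrow> \<mu> powr rr n \<delta> i \<le> M"
  shows "Nf n (dil n \<delta> \<mu> y) \<le> M * Nf n y"
proof -
  have "Nf n (dil n \<delta> \<mu> y) = (\<Sum>i=1..n. \<mu> powr rr n \<delta> i * \<bar>y i\<bar>)"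
    unfolding Nf_def dil_def using assms(1) by (simp add: abs_mult)
  also have "\<dots> \<le> (\<Sum>i=1..n. M * \<bar>y i\<bar>)"
    using assms by (intro sum_mono mult_right_mono) auto
  finally show ?thesis by (simp add: Nf_def sum_distrib_left)
qed

lemma shell_v0:
  assumes d: "0 \<le> \<delta>" "\<delta> \<le> dz" and g: "VV (dil n \<delta> 2 y) > 1"
  shows "VV y \<ge> v0"
proof -
  have "Nf n (dil n \<delta> 2 y) \<le> 4 * Nf n y"
  proof (rule N_dil)
    fix i assume i: "1 \<le> i" "i \<le> n"
    have "(2::real) powr rr n \<delta> i \<le> 2 powr 2" using rr_bounds[OF d i(1)] by (intro powr_mono) auto
    then show "(2::real) powr rr n \<delta> i \<le> 4" by simp
  qed simp
  then have "(Nf n (dil n \<delta> 2 y))^2 \<le> (4 * Nf n y)^2" using Nf_nonneg by (intro power_mono) auto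
  then have "Lam * (Nf n (dil n \<delta> 2 y))^2 \<le> Lam * (4 * Nf n y)^2" by (rule mult_left_mono[OF _ Lam0])
  moreover have "(4 * Nf n y)^2 = 16 * (Nf n y)^2" by (simp add: power_mult_distrib)
  ultimately have "VV (dil n \<delta> 2 y) \<le> Lam * (16 * (Nf n y)^2)"
    using V_le_N[of "dil n \<delta> 2 y"] by simp
  also have "\<dots> \<le> Lam * (16 * (KK * VV y))" using N_le_V[of y] Lam0 by (intro mult_left_mono) auto
  also have "\<dots> \<le> 16 * (Lam+1) * (KK+1) * VV y"
  proof -
    have "Lam * KK \<le> (Lam+1)*(KK+1)" using Lam0 KK0 by (simp add: algebra_simps)
    then have h: "16*(Lam*KK) \<le> 16*((Lam+1)*(KK+1))" by simp
    have m: "16*(Lam*KK)*VV y \<le> 16*((Lam+1)*(KK+1))*VV y" by (rule mult_right_mono[OF h V_nonneg])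
    have e1: "Lam * (16 * (KK * VV y)) = 16*(Lam*KK)*VV y" by (simp add: mult_ac)
    have e2: "16 * (Lam+1) * (KK+1) * VV y = 16*((Lam+1)*(KK+1))*VV y" by (simp add: mult_ac)
    show ?thesis unfolding e1 e2 by (rule m)
  qed
  finally have f: "1 < 16 * (Lam+1) * (KK+1) * VV y" using g by simp
  have D: "16*(Lam+1)*(KK+1) > 0" using Lam0 KK0 by (intro mult_pos_pos) auto
  have "1 \<le> VV y * (16*(Lam+1)*(KK+1))" using f by (metis mult.commute less_imp_le)
  then show ?thesis unfolding v0_def pos_divide_le_eq[OF D] .
qed

end

context ftsys begin

lemma H_deriv:
  assumes lam: "lam > 0" and d: "0 \<le> \<delta>"
    and der: "\<And>i. 1 \<le> i \<Longrightarrow> i \<le> n \<Longrightarrow> ((\<lambda>s. x s i) has_real_derivative Fv n C \<delta> (x t) i) (at t)"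
  shows "((\<lambda>s. VV (dil n \<delta> (1/lam) (x s))) has_real_derivative
           (1/lam) powr \<delta> * DV (dil n \<delta> (1/lam) (x t)) (Fv n C \<delta> (dil n \<delta> (1/lam) (x t)))) (at t)"
proof -
  have "((\<lambda>s. VV (dil n \<delta> (1/lam) (x s))) has_real_derivative
           DV (dil n \<delta> (1/lam) (x t)) (dil n \<delta> (1/lam) (Fv n C \<delta> (x t)))) (at t)"
    by (rule Vf_deriv) (unfold dil_def, intro DERIV_cmult der)
  then show ?thesis using DVf_hom[of "1/lam" \<delta>] lam d by simp
qed

lemma finite_time:
  assumes d: "0 < \<delta>" "\<delta> \<le> dz"
    and cont: "\<And>i. 1 \<le> i \<Longrightarrow> i \<le> n \<Longrightarrow> continuous_on {0..} (\<lambda>t. x t i)"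
    and der: "\<And>t i. t > 0 \<Longrightarrow> 1 \<le> i \<Longrightarrow> i \<le> n \<Longrightarrow>
                ((\<lambda>s. x s i) has_real_derivative Fv n C \<delta> (x t) i) (at t)"
  shows "\<exists>T\<ge>0. \<forall>t\<ge>T. \<forall>i\<in>{1..n}. x t i = 0"
proof -
  have d0: "0 \<le> \<delta>" using d by simp
  define lam0 where "lam0 = 1 + Lam * (Nf n (x 0))^2"
  have lam01: "lam0 \<ge> 1" using Lam0 by (simp add: lam0_def)
  define L where "L m = lam0 * (1/2)^m" for m
  have Lpos: "L m > 0" for m using lam01 by (simp add: L_def)
  define H where "H m t = VV (dil n \<delta> (1/L m) (x t))" for m t
  have Hcont: "continuous_on {0..} (H m)" for m
    unfolding H_def dil_def by (intro VV_cont continuous_intros cont)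
  have Hder: "(H m has_real_derivative (1/L m) powr \<delta> * DV (dil n \<delta> (1/L m) (x t)) (Fv n C \<delta> (dil n \<delta> (1/L m) (x t)))) (at t)"
    if "t > 0" for m t
    unfolding H_def[abs_def] by (rule H_deriv[OF Lpos d0]) (rule der[OF that])
  have Hneg: "(1/L m) powr \<delta> * DV (dil n \<delta> (1/L m) (x t)) (Fv n C \<delta> (dil n \<delta> (1/L m) (x t)))
        \<le> - ((1/L m) powr \<delta> * c1)" if "v0 \<le> H m t" "H m t \<le> 2" for m t
  proof -
    have k: "DV (dil n \<delta> (1/L m) (x t)) (Fv n C \<delta> (dil n \<delta> (1/L m) (x t))) \<le> -c1"
      using key_E[OF d0 d(2)] that by (simp add: H_def)
    show ?thesis using mult_left_mono[OF k, of "(1/L m) powr \<delta>"] by simp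
  qed
  have inv: "H m t \<le> 1" if T: "0 \<le> T" "H m T \<le> 1" "T \<le> t" for m T t
  proof (rule barrier[OF T(3)])
    show "continuous_on {T..t} (H m)" by (rule continuous_on_subset[OF Hcont]) (use T in auto)
    fix s assume s: "T < s" "s < t"
    show "(H m has_real_derivative (1/L m) powr \<delta> * DV (dil n \<delta> (1/L m) (x s)) (Fv n C \<delta> (dil n \<delta> (1/L m) (x s)))) (at s)"
      using s T by (intro Hder) auto
    assume "1 < H m s" "H m s < 2"
    then have "(1/L m) powr \<delta> * DV (dil n \<delta> (1/L m) (x s)) (Fv n C \<delta> (dil n \<delta> (1/L m) (x s))) \<le> - ((1/L m) powr \<delta> * c1)"
      using v0le by (intro Hneg) auto
    also have "\<dots> \<le> 0" using c1pos by simp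
    finally show "(1/L m) powr \<delta> * DV (dil n \<delta> (1/L m) (x s)) (Fv n C \<delta> (dil n \<delta> (1/L m) (x s))) \<le> 0" .
  qed (use T in auto)
  have Hsucc: "H (Suc m) t = VV (dil n \<delta> 2 (dil n \<delta> (1/L m) (x t)))" for m t
  proof -
    have "1 / L (Suc m) = 2 * (1 / L m)" by (simp add: L_def)
    then show ?thesis unfolding H_def using Lpos[of m] by (simp add: dil_dil)
  qed
  have Lp: "(1/L m) powr \<delta> * (L m) powr \<delta> = 1" for m
    using Lpos[of m] by (simp add: powr_mult[symmetric])
  have step: "\<exists>T'. T \<le> T' \<and> T' \<le> T + (L m) powr \<delta> / c1 \<and> H (Suc m) T' \<le> 1"
    if T: "0 \<le> T" "H m T \<le> 1" for m T
  proof (rule ccontr)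
    assume "\<not> ?thesis"
    then have big: "1 < H (Suc m) s" if "T \<le> s" "s \<le> T + (L m) powr \<delta> / c1" for s
      using that by force
    define tau where "tau = (L m) powr \<delta> / c1"
    have tau: "tau > 0" using Lpos[of m] c1pos by (simp add: tau_def)
    have "H m (T + tau) - H m T \<le> (- ((1/L m) powr \<delta> * c1)) * ((T + tau) - T)"
    proof (rule mvt_bound)
      show "T < T + tau" using tau by simp
      show "continuous_on {T..T+tau} (H m)" by (rule continuous_on_subset[OF Hcont]) (use T in auto)
      fix s assume s: "T < s" "s < T + tau"
      show "(H m has_real_derivative (1/L m) powr \<delta> * DV (dil n \<delta> (1/L m) (x s)) (Fv n C \<delta> (dil n \<delta> (1/L m) (x s)))) (at s)"
        using s T by (intro Hder) auto
      have "H m s \<le> 1" using inv[OF T] s by simp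
      moreover have "v0 \<le> H m s"
      proof -
        have "1 < H (Suc m) s" using big[of s] s by (simp add: tau_def)
        then have "1 < VV (dil n \<delta> 2 (dil n \<delta> (1/L m) (x s)))" by (simp only: Hsucc)
        then show ?thesis using shell_v0[OF d0 d(2)] by (simp add: H_def)
      qed
      ultimately show "(1/L m) powr \<delta> * DV (dil n \<delta> (1/L m) (x s)) (Fv n C \<delta> (dil n \<delta> (1/L m) (x s))) \<le> - ((1/L m) powr \<delta> * c1)"
        by (intro Hneg) auto
    qed
    also have "\<dots> = - ((1/L m) powr \<delta> * (L m) powr \<delta>)" using c1pos by (simp add: tau_def)
    also have "\<dots> = -1" using Lp by simp
    finally have "H m (T + tau) \<le> 0" using T by simp
    moreover have "v0 \<le> H m (T + tau)"
    proof -
      have "1 < H (Suc m) (T + tau)" using big[of "T + tau"] tau by (simp add: tau_def)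
      then have "1 < VV (dil n \<delta> 2 (dil n \<delta> (1/L m) (x (T + tau))))" by (simp only: Hsucc)
      then show ?thesis using shell_v0[OF d0 d(2)] by (simp add: H_def)
    qed
    ultimately show False using v0pos by simp
  qed
  have base: "H 0 0 \<le> 1"
  proof -
    have N: "Nf n (dil n \<delta> (1/lam0) (x 0)) \<le> (1/lam0) * Nf n (x 0)"
    proof (rule N_dil)
      show "1/lam0 > 0" using lam01 by simp
      fix i assume i: "1 \<le> i" "i \<le> n"
      have "(1/lam0) powr rr n \<delta> i \<le> (1/lam0) powr 1"
        using rr_bounds[OF d0 d(2) i(1)] lam01 by (intro powr_mono') auto
      then show "(1/lam0) powr rr n \<delta> i \<le> 1/lam0" using lam01 by simp
    qed
    have "H 0 0 \<le> Lam * (Nf n (dil n \<delta> (1/lam0) (x 0)))^2" unfolding H_def L_def by (simp add: V_le_N)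
    also have "\<dots> \<le> Lam * ((1/lam0) * Nf n (x 0))^2"
      using N Nf_nonneg Lam0 by (intro mult_left_mono power_mono) auto
    also have "\<dots> = (Lam * (Nf n (x 0))^2) / lam0 / lam0" by (simp add: power2_eq_square field_simps)
    also have "\<dots> \<le> 1"
    proof -
      have a: "Lam * (Nf n (x 0))^2 \<le> lam0" by (simp add: lam0_def)
      have "(Lam * (Nf n (x 0))^2) / lam0 \<le> 1" using a lam01 by simp
      then have "(Lam * (Nf n (x 0))^2) / lam0 / lam0 \<le> 1 / lam0"
        using lam01 by (intro divide_right_mono) auto
      also have "\<dots> \<le> 1" using lam01 by simp
      finally show ?thesis .
    qed
    finally show ?thesis .
  qed
  define a where "a j = (L j) powr \<delta> / c1" for j
  define q :: real where "q = (1/2) powr \<delta>"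
  have q: "0 \<le> q" "q < 1"
  proof -
    show "0 \<le> q" by (simp add: q_def)
    have "1 < 2 powr \<delta>" using d by simp
    then show "q < 1" by (simp add: q_def powr_divide)
  qed
  have aeq: "a j = (lam0 powr \<delta> / c1) * q^j" for j
  proof -
    have "((1/2::real)^j) powr \<delta> = ((1/2) powr real j) powr \<delta>" by (simp add: powr_realpow)
    also have "\<dots> = q^j" by (simp add: q_def powr_powr powr_power mult.commute)
    finally show ?thesis by (simp add: a_def L_def powr_mult)
  qed
  have summ: "summable a"
    unfolding aeq[abs_def] by (intro summable_mult summable_geometric) (use q in simp)
  have a0: "a j \<ge> 0" for j using c1pos by (simp add: a_def)
  define Sb where "Sb = suminf a"
  have Sb: "sum a {..<m} \<le> Sb" for m unfolding Sb_def using summ a0 by (intro sum_le_suminf) auto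
  have iter: "\<exists>T. 0 \<le> T \<and> T \<le> sum a {..<m} \<and> H m T \<le> 1" for m
  proof (induction m)
    case 0 then show ?case using base by (intro exI[of _ 0]) simp
  next
    case (Suc m)
    then obtain T where T: "0 \<le> T" "T \<le> sum a {..<m}" "H m T \<le> 1" by blast
    obtain T' where T': "T \<le> T'" "T' \<le> T + a m" "H (Suc m) T' \<le> 1"
      using step[OF T(1,3)] unfolding a_def by blast
    show ?case using T T' by (intro exI[of _ T']) auto
  qed
  have Sb0: "Sb \<ge> 0" using Sb[of 0] by simp
  show ?thesis
  proof (intro exI[of _ Sb] conjI allI impI ballI)
    show "0 \<le> Sb" by (rule Sb0)
    fix t i assume t: "Sb \<le> t" and i: "i \<in> {1..n}"
    have Hle: "H m t \<le> 1" for m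
    proof -
      obtain T where T: "0 \<le> T" "T \<le> sum a {..<m}" "H m T \<le> 1" using iter by blast
      show ?thesis using inv[OF T(1,3)] T(2) Sb[of m] t by simp
    qed
    have bnd: "(x t i)^2 \<le> (L m)^2 * KK" if Lm: "L m \<le> 1" for m
    proof -
      define r where "r = rr n \<delta> i"
      have r1: "1 \<le> r" using rr_bounds[OF d0 d(2)] i by (simp add: r_def)
      define y where "y = dil n \<delta> (1/L m) (x t)"
      have "(y i)^2 \<le> KK * VV y" using i by (intro comp_sq_le) auto
      also have "\<dots> \<le> KK * 1" using Hle[of m] KK0 by (intro mult_left_mono) (auto simp: H_def y_def)
      finally have yb: "(y i)^2 \<le> KK" by simp
      have xi: "x t i = (L m) powr r * y i"
      proof -
        have "(L m) powr r * (1/L m) powr r = 1" using Lpos[of m] by (simp add: powr_mult[symmetric])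
        then show ?thesis by (simp add: y_def dil_def r_def mult.assoc[symmetric])
      qed
      have Lr: "(L m) powr r \<le> L m" using powr_mono'[OF r1, of "L m"] Lpos[of m] Lm by simp
      have "(x t i)^2 = ((L m) powr r)^2 * (y i)^2" by (simp add: xi power_mult_distrib)
      also have "\<dots> \<le> (L m)^2 * KK"
        using Lr yb by (intro mult_mono power_mono) auto
      finally show ?thesis .
    qed
    have Llim: "L \<longlonglongrightarrow> 0"
    proof -
      have "(\<lambda>m. lam0 / 2^m) \<longlonglongrightarrow> 0" by (rule LIMSEQ_divide_realpow_zero) simp
      moreover have "L = (\<lambda>m. lam0 / 2^m)" by (rule ext) (simp add: L_def power_one_over)
      ultimately show ?thesis by simp
    qed
    have ev: "eventually (\<lambda>m. L m < 1) sequentially" using Llim by (rule order_tendstoD) simp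
    have lim2: "(\<lambda>m. (L m)^2 * KK) \<longlonglongrightarrow> 0" using Llim by (auto intro!: tendsto_eq_intros)
    have "(x t i)^2 \<le> 0"
      by (rule tendsto_le[OF _ lim2 tendsto_const]) (use ev bnd in \<open>auto elim: eventually_mono\<close>)
    then show "x t i = 0" by simp
  qed
qed

end

lemma sliding_abstract:
  fixes s g :: "real \<Rightarrow> real" and \<eta> :: real
  assumes s0: "s 0 = 0"
    and sint: "\<And>t. t \<ge> 0 \<Longrightarrow> (g has_integral s t) {0..t}"
    and ae: "AE \<tau> in lebesgue. \<tau> > 0 \<longrightarrow> s \<tau> > 0 \<longrightarrow> g \<tau> \<le> -\<eta>"
    and eta: "\<eta> > 0"
    and t: "t \<ge> 0"
  shows "s t \<le> 0"
proof (rule ccontr)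
  assume "\<not> s t \<le> 0"
  then have st: "s t > 0" by simp
  then have tpos: "t > 0" using s0 t by (cases "t = 0") auto
  have gi: "g integrable_on {0..t}" using sint[OF t] by blast
  have seq: "s u = integral {0..u} g" if "u \<in> {0..t}" for u
    using sint[of u] that by (simp add: integral_unique)
  have scont: "continuous_on {0..t} s"
    using indefinite_integral_continuous_1[OF gi] by (rule continuous_on_eq) (use seq in auto)
  define S where "S = {0..t} \<inter> s -` {..0}"
  have cl: "closed S" unfolding S_def by (rule continuous_closed_preimage[OF scont]) auto
  have aS: "0 \<in> S" using t s0 by (simp add: S_def)
  have bdd: "bdd_above S" unfolding S_def by (rule bdd_aboveI[of _ t]) auto
  define t0 where "t0 = Sup S"
  have t0S: "t0 \<in> S" unfolding t0_def using closed_contains_Sup[OF _ bdd cl] aS by blast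
  then have t0: "0 \<le> t0" "t0 \<le> t" "s t0 \<le> 0" by (auto simp: S_def)
  have above: "0 < s u" if "t0 < u" "u \<le> t" for u
  proof (rule ccontr)
    assume "\<not> 0 < s u"
    then have "u \<in> S" using that t0 by (auto simp: S_def)
    then have "u \<le> t0" unfolding t0_def by (rule cSup_upper[OF _ bdd])
    then show False using that by simp
  qed
  have tt0: "t0 < t" using t0 st by (metis order.order_iff_strict not_le)
  have comb: "integral {0..t0} g + integral {t0..t} g = integral {0..t} g"
    by (rule Henstock_Kurzweil_Integration.integral_combine[OF t0(1,2) gi])
  have gi2: "g integrable_on {t0..t}" by (rule integrable_subinterval_real[OF gi]) (use t0 in auto)
  have hi: "(g has_integral (s t - s t0)) {t0..t}"
  proof -
    have "s t - s t0 = integral {t0..t} g" using comb seq[of t] seq[of t0] t0 t by simp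
    then show ?thesis using integrable_integral[OF gi2] by simp
  qed
  obtain N where N: "\<And>x. x \<in> space lebesgue - N \<Longrightarrow> (x > 0 \<longrightarrow> s x > 0 \<longrightarrow> g x \<le> -\<eta>)" "N \<in> null_sets lebesgue"
    using AE_E3[OF ae] by blast
  have negN: "negligible (N \<union> {t0})" using N(2) negligible_iff_null_sets by auto
  define g' where "g' x = (if x \<in> N \<union> {t0} then -\<eta> else g x)" for x
  have hi': "(g' has_integral (s t - s t0)) {t0..t}"
    by (rule has_integral_spike[OF negN _ hi]) (simp add: g'_def)
  have le: "g' x \<le> -\<eta>" if "x \<in> {t0..t}" for x
  proof (cases "x \<in> N \<union> {t0}")
    case True then show ?thesis by (simp add: g'_def)
  next
    case False
    then have x: "t0 < x" "x \<le> t" using that by auto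
    then have "x > 0" using t0 by simp
    moreover have "s x > 0" using above[OF x] .
    ultimately show ?thesis using N(1)[of x] False by (simp add: g'_def)
  qed
  have "s t - s t0 \<le> Henstock_Kurzweil_Integration.content {t0..t} *\<^sub>R (-\<eta>)"
    by (rule has_integral_le[OF hi' has_integral_const_real le])
  also have "\<dots> = -\<eta> * (t - t0)" using tt0 by simp
  also have "\<dots> < 0" using eta tt0 by simp
  finally show False using st t0 by simp
qed

lemma alpha_aux_closed:
  fixes d :: real assumes "d \<ge> 0"
  shows "alpha_aux (1/(1+d)) m = (1/(1+real(m+1)*d), 1/(1+real m*d))"
proof (induction m)
  case 0 then show ?case by simp
next
  case (Suc m)
  have p1: "1+real(m+1)*d > 0" "1+real m*d > 0" "1 + real (m+2)*d > 0" using assms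
    by (auto intro!: add_pos_nonneg)
  define A where "A = 1+real m*d"
  define B where "B = 1+real(m+1)*d"
  have AB: "A > 0" "B > 0" "2*B - A = 1+real(m+2)*d" using p1 by (auto simp: A_def B_def algebra_simps)
  have "(1/B) * (1/A) / (2*(1/A) - 1/B) = 1/(2*B-A)"
    using AB(1,2) by (simp add: field_simps)
  then have e: "(1/B) * (1/A) / (2*(1/A) - 1/B) = 1/(1+real(m+2)*d)" using AB(3) by simp
  have "alpha_aux (1/(1+d)) (Suc m) = ((1/B) * (1/A) / (2*(1/A) - 1/B), 1/B)"
    using Suc by (simp add: A_def B_def)
  then show ?case using e by (simp add: B_def add.commute)
qed

lemma alphas_closed:
  fixes a :: real assumes "0 < a" "a < 1" "i \<le> n"
  shows "alphas n a i = 1/(1+real(n+1-i)*(1/a-1))"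
proof -
  have d: "1/a - 1 \<ge> 0" using assms by (simp add: field_simps)
  have "a = 1/(1+(1/a-1))" using assms by simp
  then have "alpha_aux a (n-i) = alpha_aux (1/(1+(1/a-1))) (n-i)" by simp
  also have "\<dots> = (1/(1+real(n-i+1)*(1/a-1)), 1/(1+real (n-i)*(1/a-1)))"
    by (rule alpha_aux_closed[OF d])
  finally show ?thesis using assms(3) unfolding alphas_def by (simp add: Suc_diff_le)
qed


lemma cont_from_integral:
  fixes F h :: "real \<Rightarrow> real"
  assumes int: "\<And>t. t \<ge> 0 \<Longrightarrow> (h has_integral (F t - F 0)) {0..t}"
  shows "continuous_on {0..} F"
proof -
  have c: "continuous_on {0..T} F" if T: "T \<ge> 0" for T
  proof -
    have hi: "h integrable_on {0..T}" using int[OF T] by blast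
    have c0: "continuous_on {0..T} (\<lambda>u. F 0 + integral {0..u} h)"
      by (intro continuous_intros indefinite_integral_continuous_1[OF hi])
    have e: "F 0 + integral {0..u} h = F u" if "u \<in> {0..T}" for u
      using integral_unique[OF int[of u]] that by simp
    show ?thesis by (rule continuous_on_eq[OF c0 e])
  qed
  show ?thesis unfolding continuous_on_eq_continuous_within
  proof
    fix t :: real assume t: "t \<in> {0..}"
    have "continuous (at t within {0..t+1}) F" using c[of "t+1"] t by (simp add: continuous_on_eq_continuous_within)
    moreover have "at t within {0..t+1} = at t within {0..}"
      by (rule at_within_nhd[of t "{..<t+1}"]) auto
    ultimately show "continuous (at t within {0..}) F" by simp
  qed
qed

lemma deriv_from_integral:
  fixes F h :: "real \<Rightarrow> real"
  assumes int: "\<And>t. t \<ge> 0 \<Longrightarrow> (h has_integral (F t - F 0)) {0..t}"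
    and hc: "continuous_on {0..} h" and t: "t > 0"
  shows "(F has_real_derivative h t) (at t)"
proof -
  have "((\<lambda>u. integral {0..u} h) has_real_derivative h t) (at t within {0..t+1})"
    by (rule integral_has_real_derivative[OF continuous_on_subset[OF hc]]) (use t in auto)
  then have d: "((\<lambda>u. integral {0..u} h) has_real_derivative h t) (at t)"
    using at_within_Icc_at[of 0 t "t+1"] t by simp
  have "((\<lambda>u. F 0 + integral {0..u} h) has_real_derivative h t) (at t)"
    using DERIV_add[OF DERIV_const d] by simp
  then show ?thesis
  proof (rule has_field_derivative_transform_within_open[where S="{0<..}"])
    fix u :: real assume "u \<in> {0<..}"
    then show "F 0 + integral {0..u} h = F u" using integral_unique[OF int[of u]] by simp
  qed (use t in auto)
qed

theorem theorem1:
  fixes n :: nat and C :: "nat \<Rightarrow> real"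
  assumes n1: "n \<ge> 1"
    and hurw: "hurwitz (char_poly n C)"
  shows "\<exists>\<epsilon>. 0 < \<epsilon> \<and> \<epsilon> < 1 \<and>
    (\<forall>\<alpha>. 1 - \<epsilon> < \<alpha> \<and> \<alpha> < 1 \<longrightarrow>
    (\<forall>(f :: (nat \<Rightarrow> real) \<Rightarrow> real \<Rightarrow> real) fn f\<Delta> b d0 fmax dmax \<eta>
        (x :: real \<Rightarrow> nat \<Rightarrow> real) (z :: real \<Rightarrow> real) (w :: real \<Rightarrow> real) (v :: real \<Rightarrow> real).
      loc_lipschitz_state n f \<and>
      (\<forall>y\<in>vecs n. \<forall>t\<ge>0. f y t = fn y t + f\<Delta> y t) \<and>
      (\<forall>y\<in>vecs n. \<forall>t\<ge>0. b y t \<noteq> 0) \<and>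
      fmax \<ge> 0 \<and> dmax \<ge> 0 \<and>
      (\<forall>y\<in>vecs n. \<forall>t\<ge>0. \<bar>f\<Delta> y t\<bar> \<le> fmax) \<and>
      (\<forall>y\<in>vecs n. \<forall>t\<ge>0. \<bar>d0 y t\<bar> \<le> dmax) \<and>
      \<eta> > 0 \<and>
      \<comment> \<open>trajectory: absolutely continuous (integral form) solution on [0,oo)\<close>
      (\<forall>t\<ge>0. x t \<in> vecs n) \<and>
      (\<forall>i\<in>{1..<n}. \<forall>t\<ge>0. ((\<lambda>\<tau>. x \<tau> (i + 1)) has_integral (x t i - x 0 i)) {0..t}) \<and>
      (\<forall>t\<ge>0. (w has_integral (x t n - x 0 n)) {0..t}) \<and>
      \<comment> \<open>integral-terminal sliding variable s = x_n - z with z(0) = x_n(0)\<close>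
      z 0 = x 0 n \<and>
      (\<forall>t\<ge>0. (z has_real_derivative
          (- (\<Sum>i=1..n. C i * \<bar>x t i\<bar> powr alphas n \<alpha> i * sgn (x t i)))) (at t within {0..})) \<and>
      \<comment> \<open>discontinuous control term: v = -(eta+dmax+fmax) sgn(s), set-valued at s = 0\<close>
      (\<forall>t\<ge>0. v t \<in> (\<lambda>\<sigma>. - (\<eta> + dmax + fmax) * \<sigma>) ` Sgn (x t n - z t)) \<and>
      \<comment> \<open>closed loop: x_n' = f + b u + d0 with u = b^-1 (u_eqv + u_dis), a.e.\<close>
      (AE \<tau> in lebesgue. \<tau> \<ge> 0 \<longrightarrow>
         w \<tau> = f (x \<tau>) \<tau> + b (x \<tau>) \<tau> *
           (inverse (b (x \<tau>) \<tau>) *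
             ((- fn (x \<tau>) \<tau> - (\<Sum>i=1..n. C i * \<bar>x \<tau> i\<bar> powr alphas n \<alpha> i * sgn (x \<tau> i)))
              + v \<tau>))
           + d0 (x \<tau>) \<tau>)
      \<longrightarrow> (\<exists>T\<ge>0. \<forall>t\<ge>T. \<forall>i\<in>{1..n}. x t i = 0)))"
proof -
  obtain rt where cp: "qq rt n = char_poly n C" and rneg: "\<And>i. i < n \<Longrightarrow> Re (rt i) < 0"
    using char_poly_factor[OF hurw] by blast
  define \<sigma> where "\<sigma> = Min ((\<lambda>i. - Re (rt i)) ` {..<n})"
  have fin: "finite ((\<lambda>i. - Re (rt i)) ` {..<n})" by simp
  have "0 \<in> {..<n}" using n1 by simp
  then have ne: "(\<lambda>i. - Re (rt i)) ` {..<n} \<noteq> {}" by blast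
  have s0: "\<sigma> > 0" unfolding \<sigma>_def using fin ne rneg by (auto simp: Min_gr_iff)
  have rts: "Re (rt j) \<le> -\<sigma>" if "j < n" for j
  proof -
    have "\<sigma> \<le> - Re (rt j)" unfolding \<sigma>_def using fin that by (intro Min_le) auto
    then show ?thesis by simp
  qed
  interpret F: ftsys n C rt \<sigma> using n1 cp s0 rts by unfold_locales auto
  define \<epsilon> where "\<epsilon> = F.dz / (1 + F.dz)"
  have dzp: "F.dz > 0" by (rule F.dzpos)
  have e1: "1 - \<epsilon> = 1 / (1 + F.dz)" using dzp by (simp add: \<epsilon>_def field_simps)
  show ?thesis
  proof (rule exI[of _ \<epsilon>], intro conjI allI impI)
    show "0 < \<epsilon>" using dzp by (simp add: \<epsilon>_def)
  next
    show "\<epsilon> < 1" using dzp by (simp add: \<epsilon>_def)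
  next
    fix \<alpha> :: real and f :: "(nat \<Rightarrow> real) \<Rightarrow> real \<Rightarrow> real" and fn f\<Delta> b d0 fmax dmax \<eta>
      and x :: "real \<Rightarrow> nat \<Rightarrow> real" and z w v :: "real \<Rightarrow> real"
    assume \<alpha>: "1 - \<epsilon> < \<alpha> \<and> \<alpha> < 1"
    assume H: "loc_lipschitz_state n f \<and>
      (\<forall>y\<in>vecs n. \<forall>t\<ge>0. f y t = fn y t + f\<Delta> y t) \<and>
      (\<forall>y\<in>vecs n. \<forall>t\<ge>0. b y t \<noteq> 0) \<and>
      fmax \<ge> 0 \<and> dmax \<ge> 0 \<and>
      (\<forall>y\<in>vecs n. \<forall>t\<ge>0. \<bar>f\<Delta> y t\<bar> \<le> fmax) \<and>
      (\<forall>y\<in>vecs n. \<forall>t\<ge>0. \<bar>d0 y t\<bar> \<le> dmax) \<and>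
      \<eta> > 0 \<and>
      \<comment> \<open>trajectory: absolutely continuous (integral form) solution on [0,oo)\<close>
      (\<forall>t\<ge>0. x t \<in> vecs n) \<and>
      (\<forall>i\<in>{1..<n}. \<forall>t\<ge>0. ((\<lambda>\<tau>. x \<tau> (i + 1)) has_integral (x t i - x 0 i)) {0..t}) \<and>
      (\<forall>t\<ge>0. (w has_integral (x t n - x 0 n)) {0..t}) \<and>
      \<comment> \<open>integral-terminal sliding variable s = x_n - z with z(0) = x_n(0)\<close>
      z 0 = x 0 n \<and>
      (\<forall>t\<ge>0. (z has_real_derivative
          (- (\<Sum>i=1..n. C i * \<bar>x t i\<bar> powr alphas n \<alpha> i * sgn (x t i)))) (at t within {0..})) \<and>
      \<comment> \<open>discontinuous control term: v = -(eta+dmax+fmax) sgn(s), set-valued at s = 0\<close>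
      (\<forall>t\<ge>0. v t \<in> (\<lambda>\<sigma>. - (\<eta> + dmax + fmax) * \<sigma>) ` Sgn (x t n - z t)) \<and>
      \<comment> \<open>closed loop: x_n' = f + b u + d0 with u = b^-1 (u_eqv + u_dis), a.e.\<close>
      (AE \<tau> in lebesgue. \<tau> \<ge> 0 \<longrightarrow>
         w \<tau> = f (x \<tau>) \<tau> + b (x \<tau>) \<tau> *
           (inverse (b (x \<tau>) \<tau>) *
             ((- fn (x \<tau>) \<tau> - (\<Sum>i=1..n. C i * \<bar>x \<tau> i\<bar> powr alphas n \<alpha> i * sgn (x \<tau> i)))
              + v \<tau>))
           + d0 (x \<tau>) \<tau>)"
    have fdec: "\<forall>y\<in>vecs n. \<forall>t\<ge>0. f y t = fn y t + f\<Delta> y t" using H by (elim conjE) assumption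
    have bnz: "\<forall>y\<in>vecs n. \<forall>t\<ge>0. b y t \<noteq> 0" using H by (elim conjE) assumption
    have fmax: "fmax \<ge> 0" using H by (elim conjE) assumption
    have dmax: "dmax \<ge> 0" using H by (elim conjE) assumption
    have fD: "\<forall>y\<in>vecs n. \<forall>t\<ge>0. \<bar>f\<Delta> y t\<bar> \<le> fmax" using H by (elim conjE) assumption
    have dD: "\<forall>y\<in>vecs n. \<forall>t\<ge>0. \<bar>d0 y t\<bar> \<le> dmax" using H by (elim conjE) assumption
    have eta: "\<eta> > 0" using H by (elim conjE) assumption
    have xv: "\<forall>t\<ge>0. x t \<in> vecs n" using H by (elim conjE) assumption
    have xint: "\<forall>i\<in>{1..<n}. \<forall>t\<ge>0. ((\<lambda>\<tau>. x \<tau> (i + 1)) has_integral (x t i - x 0 i)) {0..t}" using H by (elim conjE) assumption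
    have wint: "\<forall>t\<ge>0. (w has_integral (x t n - x 0 n)) {0..t}" using H by (elim conjE) assumption
    have z0: "z 0 = x 0 n" using H by (elim conjE) assumption
    have zder0: "\<forall>t\<ge>0. (z has_real_derivative
          (- (\<Sum>i=1..n. C i * \<bar>x t i\<bar> powr alphas n \<alpha> i * sgn (x t i)))) (at t within {0..})" using H by (elim conjE) assumption
    have vS: "\<forall>t\<ge>0. v t \<in> (\<lambda>\<sigma>. - (\<eta> + dmax + fmax) * \<sigma>) ` Sgn (x t n - z t)" using H by (elim conjE) assumption
    have ae0: "AE \<tau> in lebesgue. \<tau> \<ge> 0 \<longrightarrow>
         w \<tau> = f (x \<tau>) \<tau> + b (x \<tau>) \<tau> *
           (inverse (b (x \<tau>) \<tau>) *
             ((- fn (x \<tau>) \<tau> - (\<Sum>i=1..n. C i * \<bar>x \<tau> i\<bar> powr alphas n \<alpha> i * sgn (x \<tau> i)))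
              + v \<tau>))
           + d0 (x \<tau>) \<tau>" using H by (elim conjE) assumption
    have "1/(1+F.dz) > 0" using dzp by simp
    then have a0: "\<alpha> > 0" using \<alpha> e1 by linarith
    define \<delta> where "\<delta> = 1/\<alpha> - 1"
    have dpos: "\<delta> > 0" using \<alpha> a0 by (simp add: \<delta>_def)
    have dle: "\<delta> \<le> F.dz"
    proof -
      have "1/(1+F.dz) < \<alpha>" using \<alpha> e1 by simp
      then have "1 < \<alpha> * (1 + F.dz)" using dzp by (simp add: field_simps)
      then have "1/\<alpha> < 1 + F.dz" using a0 by (simp add: field_simps)
      then show ?thesis by (simp add: \<delta>_def)
    qed
    have alph: "alphas n \<alpha> i = 1 / rr n \<delta> i" if "i \<le> n" for i
      using alphas_closed[OF a0 _ that] \<alpha> by (simp add: rr_def \<delta>_def)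
    define Sg where "Sg t = (\<Sum>i=1..n. C i * \<bar>x t i\<bar> powr alphas n \<alpha> i * sgn (x t i))" for t
    have Sg_eq: "Sg t = (\<Sum>i=1..n. C i * phi (1 / rr n \<delta> i) (x t i))" for t
      unfolding Sg_def by (intro sum.cong refl) (simp add: alph phi_def mult.assoc)
    have FvN: "Fv n C \<delta> (x t) n = - Sg t" for t by (simp add: Fv_def Sg_eq)
    define s where "s t = x t n - z t" for t
    define g where "g t = w t + Sg t" for t
    have gint: "(g has_integral s t) {0..t}" if t: "t \<ge> 0" for t
    proof -
      have "((\<lambda>u. - Sg u) has_integral (z t - z 0)) {0..t}"
      proof (rule fundamental_theorem_of_calculus[OF t])
        fix u assume u: "u \<in> {0..t}"
        have "(z has_real_derivative (- Sg u)) (at u within {0..})" using zder0 u by (simp add: Sg_def)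
        then have "(z has_real_derivative (- Sg u)) (at u within {0..t})" by (rule DERIV_subset) auto
        then show "(z has_vector_derivative (- Sg u)) (at u within {0..t})"
          by (simp add: has_real_derivative_iff_has_vector_derivative)
      qed
      from has_integral_neg[OF this] have "(Sg has_integral - (z t - z 0)) {0..t}" by simp
      moreover have "(w has_integral (x t n - x 0 n)) {0..t}" using wint t by blast
      ultimately have "((\<lambda>u. w u + Sg u) has_integral ((x t n - x 0 n) + - (z t - z 0))) {0..t}"
        by (intro has_integral_add)
      moreover have "g = (\<lambda>u. w u + Sg u)" by (rule ext) (simp add: g_def)
      ultimately show ?thesis using z0 by (simp add: s_def)
    qed
    have pw: "g \<tau> = f\<Delta> (x \<tau>) \<tau> + d0 (x \<tau>) \<tau> + v \<tau>"
      if t: "\<tau> \<ge> 0" and we: "w \<tau> = f (x \<tau>) \<tau> + b (x \<tau>) \<tau> *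
           (inverse (b (x \<tau>) \<tau>) *
             ((- fn (x \<tau>) \<tau> - (\<Sum>i=1..n. C i * \<bar>x \<tau> i\<bar> powr alphas n \<alpha> i * sgn (x \<tau> i)))
              + v \<tau>))
           + d0 (x \<tau>) \<tau>" for \<tau>
    proof -
      have xt: "x \<tau> \<in> vecs n" using xv t by blast
      have "b (x \<tau>) \<tau> \<noteq> 0" using bnz xt t by blast
      then have "w \<tau> = f (x \<tau>) \<tau> + ((- fn (x \<tau>) \<tau> - Sg \<tau>) + v \<tau>) + d0 (x \<tau>) \<tau>"
        using we by (simp add: Sg_def)
      moreover have "f (x \<tau>) \<tau> = fn (x \<tau>) \<tau> + f\<Delta> (x \<tau>) \<tau>" using fdec xt t by blast
      ultimately show ?thesis by (simp add: g_def)
    qed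
    have bnds: "\<bar>f\<Delta> (x \<tau>) \<tau> + d0 (x \<tau>) \<tau>\<bar> \<le> fmax + dmax" if "\<tau> \<ge> 0" for \<tau>
    proof -
      have xt: "x \<tau> \<in> vecs n" using xv that by blast
      have "\<bar>f\<Delta> (x \<tau>) \<tau>\<bar> \<le> fmax" "\<bar>d0 (x \<tau>) \<tau>\<bar> \<le> dmax" using fD dD xt that by blast+
      then show ?thesis by linarith
    qed
    have vpos: "v \<tau> = - (\<eta> + dmax + fmax)" if "\<tau> \<ge> 0" "s \<tau> > 0" for \<tau>
    proof -
      have "Sgn (x \<tau> n - z \<tau>) = {1}" using that(2) by (simp add: Sgn_def s_def)
      moreover have "v \<tau> \<in> (\<lambda>\<sigma>. - (\<eta> + dmax + fmax) * \<sigma>) ` Sgn (x \<tau> n - z \<tau>)" using vS that(1) by blast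
      ultimately show ?thesis by simp
    qed
    have vneg: "v \<tau> = (\<eta> + dmax + fmax)" if "\<tau> \<ge> 0" "s \<tau> < 0" for \<tau>
    proof -
      have "Sgn (x \<tau> n - z \<tau>) = {-1}" using that(2) by (simp add: Sgn_def s_def)
      moreover have "v \<tau> \<in> (\<lambda>\<sigma>. - (\<eta> + dmax + fmax) * \<sigma>) ` Sgn (x \<tau> n - z \<tau>)" using vS that(1) by blast
      ultimately show ?thesis by simp
    qed
    have ae1: "AE \<tau> in lebesgue. \<tau> > 0 \<longrightarrow> s \<tau> > 0 \<longrightarrow> g \<tau> \<le> -\<eta>"
    proof (rule eventually_mono[OF ae0], intro impI)
      fix \<tau> assume a: "0 \<le> \<tau> \<longrightarrow> w \<tau> = f (x \<tau>) \<tau> + b (x \<tau>) \<tau> *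
           (inverse (b (x \<tau>) \<tau>) *
             ((- fn (x \<tau>) \<tau> - (\<Sum>i=1..n. C i * \<bar>x \<tau> i\<bar> powr alphas n \<alpha> i * sgn (x \<tau> i)))
              + v \<tau>))
           + d0 (x \<tau>) \<tau>" and t: "\<tau> > 0" and sp: "s \<tau> > 0"
      have "g \<tau> = f\<Delta> (x \<tau>) \<tau> + d0 (x \<tau>) \<tau> + v \<tau>" using a t by (intro pw) auto
      then show "g \<tau> \<le> -\<eta>" using vpos[of \<tau>] bnds[of \<tau>] t sp by simp
    qed
    have ae2: "AE \<tau> in lebesgue. \<tau> > 0 \<longrightarrow> - s \<tau> > 0 \<longrightarrow> - g \<tau> \<le> -\<eta>"
    proof (rule eventually_mono[OF ae0], intro impI)
      fix \<tau> assume a: "0 \<le> \<tau> \<longrightarrow> w \<tau> = f (x \<tau>) \<tau> + b (x \<tau>) \<tau> *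
           (inverse (b (x \<tau>) \<tau>) *
             ((- fn (x \<tau>) \<tau> - (\<Sum>i=1..n. C i * \<bar>x \<tau> i\<bar> powr alphas n \<alpha> i * sgn (x \<tau> i)))
              + v \<tau>))
           + d0 (x \<tau>) \<tau>" and t: "\<tau> > 0" and sp: "- s \<tau> > 0"
      have "g \<tau> = f\<Delta> (x \<tau>) \<tau> + d0 (x \<tau>) \<tau> + v \<tau>" using a t by (intro pw) auto
      then show "- g \<tau> \<le> -\<eta>" using vneg[of \<tau>] bnds[of \<tau>] t sp by simp
    qed
    have s0': "s 0 = 0" using z0 by (simp add: s_def)
    have sl: "x t n = z t" if t: "t \<ge> 0" for t
    proof -
      have "s t \<le> 0" by (rule sliding_abstract[OF s0' gint ae1 eta t])
      moreover have "- s t \<le> 0"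
      proof (rule sliding_abstract[where s="\<lambda>t. - s t" and g="\<lambda>t. - g t", OF _ _ ae2 eta t])
        show "- s 0 = 0" using s0' by simp
        fix u :: real assume "u \<ge> 0"
        then show "((\<lambda>t. - g t) has_integral - s u) {0..u}" by (rule has_integral_neg[OF gint])
      qed
      ultimately show ?thesis by (simp add: s_def)
    qed
    have xcont: "continuous_on {0..} (\<lambda>t. x t i)" if i: "1 \<le> i" "i \<le> n" for i
    proof (cases "i < n")
      case True
      then show ?thesis using xint i by (intro cont_from_integral[where h="\<lambda>\<tau>. x \<tau> (i + 1)"]) auto
    next
      case False
      then have "i = n" using i by simp
      then show ?thesis using wint by (intro cont_from_integral[where h=w]) auto
    qed
    have xder: "((\<lambda>s. x s i) has_real_derivative Fv n C \<delta> (x t) i) (at t)"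
      if t: "t > 0" and i: "1 \<le> i" "i \<le> n" for t i
    proof (cases "i < n")
      case True
      have "((\<lambda>s. x s i) has_real_derivative x t (i + 1)) (at t)"
        using xint i True by (intro deriv_from_integral[OF _ xcont t]) auto
      then show ?thesis using True by (simp add: Fv_def)
    next
      case False
      then have iN: "i = n" using i by simp
      have "(z has_real_derivative (- Sg t)) (at t within {0..})" using zder0 t by (simp add: Sg_def)
      moreover have "at t within {0..} = at t" using t by (intro at_within_open_subset[where S="{0<..}"]) auto
      ultimately have "(z has_real_derivative (- Sg t)) (at t)" by simp
      then have "((\<lambda>s. x s n) has_real_derivative (- Sg t)) (at t)"
        by (rule has_field_derivative_transform_within_open[where S="{0<..}"]) (use t sl in auto)
      then show ?thesis using iN FvN by simp
    qed
    show "\<exists>T\<ge>0. \<forall>t\<ge>T. \<forall>i\<in>{1..n}. x t i = 0"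
      by (rule F.finite_time[OF dpos dle xcont xder])
  qed
qed

end
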